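(* Let $\Sigma\subset\mathbb{R}^3$ be a pure $3$-dimensional, hereditary, complete fan with uniform smoothness $r\ge0$ on all $2$-dimensional faces, and $S=\mathbb{R}[x,y,z]$. In the free module $\bigoplus_{\tau\in\Sigma_2}S(-r-1)e_\tau$ let $V^r=\{\sum_{\tau\in\Sigma_2}a_\tau e_\tau:\sum_\tau a_\tau l_\tau^{r+1}=0\}$, and for each ray $v\in\Sigma_1$ let $K^r_v=\{\sum_{\tau\ni v}a_\tau e_\tau:\sum_{\tau\ni v}a_\tau l_\tau^{r+1}=0\}$, and $K^r=\sum_{v\in\Sigma_1}K^r_v$. Then $K^r\subseteq V^r$ and $H_1(\mathcal{J}[\Sigma])\cong V^r/K^r$ as $S$-modules.
   Context: A cone is the positive hull of finitely many vectors in $\mathbb{R}^3$; a fan is a finite set of cones closed under faces, any two meeting in a common face; $\Sigma_i$ = $i$-dim cones; complete: the union of the cones is $\mathbb{R}^3$; hereditary: for each face $\psi$ the graph on facets containing $\psi$ (edges for pairs sharing a $2$-face) is connected. $l_\tau$ generates the ideal of the linear span of $\tau\in\Sigma_2$. $J(\tau)=\langle l_\tau^{r+1}\rangle$, $J(\gamma)=\sum_{\tau\in\Sigma_2,\gamma\subseteq\tau}J(\tau)$ for non-facets $\gamma$ (including the origin), $J(\sigma)=0$ for facets. With $u_\rho$ unit ray generators and $P(\gamma)=\mathrm{conv}(\{0\}\cup\{u_\rho:\rho\subseteq\gamma\})$, $\mathrm{lk}(\gamma)=\mathrm{conv}\{u_\rho\}$, the complex $\mathcal{R}[\Sigma]$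 has $\mathcal{R}[\Sigma]_i=\bigoplus_{\gamma\in\Sigma_i}S$ with differential the cellular boundary of the relative cellular chain complex of $(P(\Sigma),\mathrm{lk}(\Sigma))$ with $S$ coefficients, and $\mathcal{J}[\Sigma]$ is its subcomplex with $\mathcal{J}[\Sigma]_i=\bigoplus_{\gamma\in\Sigma_i}J(\gamma)$. *)

theory Defs
  imports "HOL-Analysis.Analysis" "HOL-Library.Poly_Mapping"
begin

text \<open>Ambient space R^3, cones as subsets of it, and the polynomial ring
  S = R[x,y,z] represented as finitely supported maps from monomials
  (exponent vectors indexed by the 3-element type) to real coefficients.\<close>

type_synonym vec3 = "real^3"
type_synonym poly3 = "(3 \<Rightarrow>\<^sub>0 nat) \<Rightarrow>\<^sub>0 real"

definition lin_form :: "vec3 \<Rightarrow> poly3" where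
  "lin_form n = (\<Sum>i\<in>UNIV. Poly_Mapping.single (Poly_Mapping.single i 1) (n $ i))"

definition pos_hull :: "vec3 set \<Rightarrow> vec3 set" where
  "pos_hull V = {x. \<exists>c. (\<forall>v\<in>V. 0 \<le> c v) \<and> x = (\<Sum>v\<in>V. c v *\<^sub>R v)}"

definition is_cone :: "vec3 set \<Rightarrow> bool" where
  "is_cone C \<longleftrightarrow> (\<exists>V. finite V \<and> C = pos_hull V)"

text \<open>Pointedness ({0} is a face of every cone, i.e. the
  origin is a cone of the fan) is the standing convention implicit in the paper.\<close>
definition is_fan :: "vec3 set set \<Rightarrow> bool" where
  "is_fan F \<longleftrightarrow> finite F \<and> (\<forall>C\<in>F. is_cone C \<and> {0} face_of C) \<and>
     (\<forall>C\<in>F. \<forall>T. T face_of C \<and> T \<noteq> {} \<longrightarrow> T \<in> F) \<and>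
     (\<forall>C\<in>F. \<forall>D\<in>F. (C \<inter> D) face_of C \<and> (C \<inter> D) face_of D)"

definition cones_dim :: "vec3 set set \<Rightarrow> nat \<Rightarrow> vec3 set set" where
  "cones_dim F i = {C\<in>F. aff_dim C = int i}"

definition complete_fan :: "vec3 set set \<Rightarrow> bool" where
  "complete_fan F \<longleftrightarrow> \<Union>F = UNIV"

definition pure3 :: "vec3 set set \<Rightarrow> bool" where
  "pure3 F \<longleftrightarrow> (\<forall>C\<in>F. \<exists>\<sigma>\<in>cones_dim F 3. C \<subseteq> \<sigma>)"

definition hereditary :: "vec3 set set \<Rightarrow> bool" where
  "hereditary F \<longleftrightarrow> (\<forall>\<psi>\<in>F.
     (let Fs = {\<sigma>\<in>cones_dim F 3. \<psi> \<subseteq> \<sigma>};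
          E = {(a, b). a \<in> Fs \<and> b \<in> Fs \<and> (\<exists>\<tau>\<in>cones_dim F 2. \<tau> \<subseteq> a \<and> \<tau> \<subseteq> b)}
      in \<forall>\<sigma>\<in>Fs. \<forall>\<sigma>'\<in>Fs. (\<sigma>, \<sigma>') \<in> E\<^sup>*))"

definition ray_gen :: "vec3 set \<Rightarrow> vec3" where
  "ray_gen \<rho> = (SOME u. norm u = 1 \<and> \<rho> = pos_hull {u})"

definition normal2 :: "vec3 set \<Rightarrow> vec3" where
  "normal2 \<tau> = (SOME n. n \<noteq> 0 \<and> (\<forall>x\<in>\<tau>. n \<bullet> x = 0))"

text \<open>l_tau: generator of the ideal of the linear span of tau (defined up to a scalar).\<close>
definition l_form :: "vec3 set \<Rightarrow> poly3" where
  "l_form \<tau> = lin_form (normal2 \<tau>)"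

definition det3 :: "vec3 \<Rightarrow> vec3 \<Rightarrow> vec3 \<Rightarrow> real" where
  "det3 a b c = det (vector [a, b, c] :: real^3^3)"

text \<open>Incidence numbers [gamma : gamma'] of the relative cellular chain complex of
  (P(Sigma), lk(Sigma)): the cell P(gamma) is oriented by the standard orientation
  (dim 3), by the normal vector normal2 (dim 2), by the ray generator (dim 1), and
  positively (the origin).  The boundary orientation uses the outward vector first.\<close>
definition neg_sign :: "real \<Rightarrow> int" where
  "neg_sign d = (if d > 0 then -1 else if d < 0 then 1 else 0)"

definition incid :: "vec3 set \<Rightarrow> vec3 set \<Rightarrow> int" where
  "incid \<gamma> \<gamma>' =
    (if aff_dim \<gamma> = 1 \<and> aff_dim \<gamma>' = 0 then -1
     else if aff_dim \<gamma> = 2 \<and> aff_dim \<gamma>' = 1 then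
       neg_sign (det3 (normal2 \<gamma>) (SOME q. q \<in> \<gamma> \<and> q \<notin> span \<gamma>') (ray_gen \<gamma>'))
     else if aff_dim \<gamma> = 3 \<and> aff_dim \<gamma>' = 2 then
       neg_sign (normal2 \<gamma>' \<bullet> (SOME p. p \<in> \<gamma> \<and> p \<notin> span \<gamma>'))
     else 0)"

text \<open>i-chains of R[Sigma]: elements of the direct sum over Sigma_i of copies of S,
  represented as functions on cones supported on Sigma_i.\<close>
definition chains :: "vec3 set set \<Rightarrow> nat \<Rightarrow> (vec3 set \<Rightarrow> poly3) set" where
  "chains F i = {a. \<forall>\<gamma>. \<gamma> \<notin> cones_dim F i \<longrightarrow> a \<gamma> = 0}"

definition bdry :: "vec3 set set \<Rightarrow> (vec3 set \<Rightarrow> poly3) \<Rightarrow> (vec3 set \<Rightarrow> poly3)" where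
  "bdry F a = (\<lambda>\<gamma>'. if \<gamma>' \<in> F then
      (\<Sum>\<gamma>\<in>{\<gamma>\<in>F. \<gamma>' face_of \<gamma> \<and> aff_dim \<gamma> = aff_dim \<gamma>' + 1}. of_int (incid \<gamma> \<gamma>') * a \<gamma>)
      else 0)"

definition Jid :: "vec3 set set \<Rightarrow> nat \<Rightarrow> vec3 set \<Rightarrow> poly3 set" where
  "Jid F r \<gamma> = (if aff_dim \<gamma> = 3 then {0}
     else {(\<Sum>\<tau>\<in>{\<tau>\<in>cones_dim F 2. \<gamma> \<subseteq> \<tau>}. f \<tau> * l_form \<tau> ^ (r + 1)) | f. True})"

definition Jchains :: "vec3 set set \<Rightarrow> nat \<Rightarrow> nat \<Rightarrow> (vec3 set \<Rightarrow> poly3) set" where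
  "Jchains F r i = {a \<in> chains F i. \<forall>\<gamma>. a \<gamma> \<in> Jid F r \<gamma>}"

text \<open>1-cycles and 1-boundaries of J[Sigma]; H_1(J[Sigma]) = J_cycles1 / J_boundaries1.\<close>
definition J_cycles1 :: "vec3 set set \<Rightarrow> nat \<Rightarrow> (vec3 set \<Rightarrow> poly3) set" where
  "J_cycles1 F r = {a \<in> Jchains F r 1. bdry F a = (\<lambda>_. 0)}"

definition J_boundaries1 :: "vec3 set set \<Rightarrow> nat \<Rightarrow> (vec3 set \<Rightarrow> poly3) set" where
  "J_boundaries1 F r = bdry F ` Jchains F r 2"

definition Vr :: "vec3 set set \<Rightarrow> nat \<Rightarrow> (vec3 set \<Rightarrow> poly3) set" where
  "Vr F r = {a \<in> chains F 2. (\<Sum>\<tau>\<in>cones_dim F 2. a \<tau> * l_form \<tau> ^ (r + 1)) = 0}"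

definition Kv :: "vec3 set set \<Rightarrow> nat \<Rightarrow> vec3 set \<Rightarrow> (vec3 set \<Rightarrow> poly3) set" where
  "Kv F r v = {a \<in> chains F 2. (\<forall>\<tau>. \<not> v \<subseteq> \<tau> \<longrightarrow> a \<tau> = 0) \<and>
                 (\<Sum>\<tau>\<in>{\<tau>\<in>cones_dim F 2. v \<subseteq> \<tau>}. a \<tau> * l_form \<tau> ^ (r + 1)) = 0}"

definition Kr :: "vec3 set set \<Rightarrow> nat \<Rightarrow> (vec3 set \<Rightarrow> poly3) set" where
  "Kr F r = {(\<lambda>\<tau>. \<Sum>v\<in>cones_dim F 1. k v \<tau>) | k. \<forall>v\<in>cones_dim F 1. k v \<in> Kv F r v}"

text \<open>Isomorphism of quotient modules Z/B and V/K (B a submodule of Z, K a submodule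
  of V, all submodules of function modules over a commutative ring with pointwise
  operations), expressed on representatives: g induces a well-defined, injective,
  additive, S-linear and surjective map Z/B \<rightarrow> V/K.\<close>
definition quot_mod_iso ::
  "('c \<Rightarrow> 'r::comm_ring_1) set \<Rightarrow> ('c \<Rightarrow> 'r) set \<Rightarrow> ('d \<Rightarrow> 'r) set \<Rightarrow> ('d \<Rightarrow> 'r) set \<Rightarrow> bool" where
  "quot_mod_iso Z B V K \<longleftrightarrow> (\<exists>g. (\<forall>z\<in>Z. g z \<in> V) \<and>
     (\<forall>z1\<in>Z. \<forall>z2\<in>Z. (\<lambda>x. z1 x - z2 x) \<in> B \<longleftrightarrow> (\<lambda>y. g z1 y - g z2 y) \<in> K) \<and>
     (\<forall>z1\<in>Z. \<forall>z2\<in>Z. (\<lambda>y. g (\<lambda>x. z1 x + z2 x) y - (g z1 y + g z2 y)) \<in> K) \<and>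
     (\<forall>c. \<forall>z\<in>Z. (\<lambda>y. g (\<lambda>x. c * z x) y - c * g z y) \<in> K) \<and>
     (\<forall>v\<in>V. \<exists>z\<in>Z. (\<lambda>y. g z y - v y) \<in> K))"

end

theory Submission
  imports Defs
begin


unbundle cross3_syntax

lemma ph_zero: "(0::vec3) \<in> pos_hull V"
  unfolding pos_hull_def by (rule CollectI, rule exI[of _ "\<lambda>_. 0"]) simp

lemma ph_add: assumes "x \<in> pos_hull V" "y \<in> pos_hull V" shows "x + y \<in> pos_hull V"
proof -
  obtain c where c: "\<forall>v\<in>V. 0 \<le> c v" "x = (\<Sum>v\<in>V. c v *\<^sub>R v)" using assms(1) unfolding pos_hull_def by blast
  obtain d where d: "\<forall>v\<in>V. 0 \<le> d v" "y = (\<Sum>v\<in>V. d v *\<^sub>R v)" using assms(2) unfolding pos_hull_def by blast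
  show ?thesis unfolding pos_hull_def
    by (rule CollectI, rule exI[of _ "\<lambda>v. c v + d v"]) (use c d in \<open>simp add: scaleR_add_left sum.distrib\<close>)
qed

lemma ph_scale: assumes "x \<in> pos_hull V" "0 \<le> t" shows "t *\<^sub>R x \<in> pos_hull V"
proof -
  obtain c where c: "\<forall>v\<in>V. 0 \<le> c v" "x = (\<Sum>v\<in>V. c v *\<^sub>R v)" using assms(1) unfolding pos_hull_def by blast
  show ?thesis unfolding pos_hull_def
    by (rule CollectI, rule exI[of _ "\<lambda>v. t * c v"]) (use c assms(2) in \<open>simp add: scaleR_sum_right\<close>)
qed

lemma ph_gen: assumes "finite V" "v \<in> V" shows "v \<in> pos_hull V"
  unfolding pos_hull_def
proof (rule CollectI, rule exI[of _ "\<lambda>w. if w = v then 1 else 0"])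
  have "(\<lambda>w. (if w = v then 1 else 0) *\<^sub>R w) = (\<lambda>w. if w = v then v else (0::vec3))" by auto
  then show "(\<forall>w\<in>V. 0 \<le> (if w = v then 1 else (0::real))) \<and> v = (\<Sum>w\<in>V. (if w = v then 1 else 0) *\<^sub>R w)"
    using assms by (simp only: sum.delta) simp
qed

lemma ph_convex: "convex (pos_hull V)"
  unfolding convex_def by (auto intro!: ph_add ph_scale)

lemma ph_sing: "pos_hull {u} = {t *\<^sub>R u | t. 0 \<le> t}"
  unfolding pos_hull_def by auto

lemma ph_linear_nonneg:
  assumes "x \<in> pos_hull V" "\<And>v. v \<in> V \<Longrightarrow> 0 \<le> a \<bullet> v"
  shows "0 \<le> a \<bullet> x"
proof -
  obtain c where c: "\<forall>v\<in>V. 0 \<le> c v" "x = (\<Sum>v\<in>V. c v *\<^sub>R v)" using assms(1) unfolding pos_hull_def by blast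
  show ?thesis unfolding c(2) inner_sum_right using c(1) assms(2)
    by (intro sum_nonneg) simp
qed

lemma ph_span:
  assumes "x \<in> pos_hull V" "V \<subseteq> span W"
  shows "x \<in> span W"
proof -
  obtain c where c: "\<forall>v\<in>V. 0 \<le> c v" "x = (\<Sum>v\<in>V. c v *\<^sub>R v)" using assms(1) unfolding pos_hull_def by blast
  show ?thesis unfolding c(2) using assms(2) by (intro span_sum span_mul) auto
qed

lemma four_identity:
  fixes a b c d :: vec3
  shows "(b \<bullet> (c \<times> d)) *\<^sub>R a - (a \<bullet> (c \<times> d)) *\<^sub>R b + (a \<bullet> (b \<times> d)) *\<^sub>R c - (a \<bullet> (b \<times> c)) *\<^sub>R d = 0"
  by (simp add: cross3_simps forall_3)

lemma cross_perp_zero: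
  fixes n x y :: vec3
  assumes "n \<noteq> 0" "n \<bullet> x = 0" "n \<bullet> y = 0" "n \<bullet> (x \<times> y) = 0"
  shows "x \<times> y = 0"
proof -
  have "n \<times> (x \<times> y) = 0" using assms by (simp add: Lagrange)
  then have "(norm n * norm (x \<times> y))\<^sup>2 = 0" using norm_cross_dot[of n "x \<times> y"] assms(4) by simp
  then show ?thesis using assms(1) by simp
qed

lemma triple_perp_zero:
  fixes n x y z :: vec3
  assumes "n \<noteq> 0" "n \<bullet> x = 0" "n \<bullet> y = 0" "n \<bullet> z = 0"
  shows "x \<bullet> (y \<times> z) = 0"
proof -
  have "n \<times> (y \<times> z) = 0" using assms by (simp add: Lagrange)
  then have "collinear {0, n, y \<times> z}" by (simp add: cross_eq_0)
  then obtain c where "y \<times> z = c *\<^sub>R n" using assms(1) collinear_lemma by (metis scale_zero_left)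
  then show ?thesis using assms(2) by (simp add: inner_commute)
qed

lemma cross_zero_mult:
  fixes x y :: vec3
  assumes "x \<times> y = 0" "x \<noteq> 0"
  shows "\<exists>c. y = c *\<^sub>R x"
  using assms collinear_lemma cross_eq_0 by (metis scale_zero_left)


unbundle cross3_syntax

lemma span_sing_iff: "(x::vec3) \<in> span {u} \<longleftrightarrow> (\<exists>k. x = k *\<^sub>R u)"
  by (auto simp: span_singleton)

lemma collinear_of_mults: "(\<forall>x\<in>S. \<exists>c. x = c *\<^sub>R (w::vec3)) \<Longrightarrow> collinear S"
  unfolding collinear_def
proof (intro exI[of _ w] ballI)
  fix x y assume "\<forall>x\<in>S. \<exists>c. x = c *\<^sub>R w" "x \<in> S" "y \<in> S"
  then obtain a b where "x = a *\<^sub>R w" "y = b *\<^sub>R w" by blast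
  then show "\<exists>c. x - y = c *\<^sub>R w" by (intro exI[of _ "a - b"]) (simp add: scaleR_diff_left)
qed

context
  fixes F :: "vec3 set set"
  assumes fan: "is_fan F"
begin

lemma fan_finite: "finite F" using fan unfolding is_fan_def by blast

lemma fan_cone: "C \<in> F \<Longrightarrow> \<exists>V. finite V \<and> C = pos_hull V"
  using fan unfolding is_fan_def is_cone_def by blast

lemma fan_zero_face: "C \<in> F \<Longrightarrow> {0} face_of C"
  using fan unfolding is_fan_def by blast

lemma fan_face: "C \<in> F \<Longrightarrow> T face_of C \<Longrightarrow> T \<noteq> {} \<Longrightarrow> T \<in> F"
  using fan unfolding is_fan_def by blast

lemma fan_sub_face: "C \<in> F \<Longrightarrow> D \<in> F \<Longrightarrow> D \<subseteq> C \<Longrightarrow> D face_of C"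
  using fan unfolding is_fan_def by (metis Int_absorb1 inf_commute)

lemma fan_zero: "C \<in> F \<Longrightarrow> 0 \<in> C"
  using fan_cone ph_zero by blast

lemma fan_add: "C \<in> F \<Longrightarrow> x \<in> C \<Longrightarrow> y \<in> C \<Longrightarrow> x + y \<in> C"
  using fan_cone ph_add by blast

lemma fan_scale: "C \<in> F \<Longrightarrow> x \<in> C \<Longrightarrow> 0 \<le> t \<Longrightarrow> t *\<^sub>R x \<in> C"
  using fan_cone ph_scale by blast

lemma fan_convex: "C \<in> F \<Longrightarrow> convex C"
  using fan_cone ph_convex by blast

lemma fan_pointed:
  assumes "C \<in> F" "x \<in> C" "y \<in> C" "x + y = 0"
  shows "x = 0"
proof (cases "x = y")
  case True then show ?thesis using assms(4) by (simp add: scaleR_2[symmetric])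
next
  case False
  have "midpoint x y = 0" using assms(4) by (simp add: midpoint_def)
  then have "0 \<in> open_segment x y" using False midpoint_in_open_segment by metis
  then show ?thesis using face_ofD[OF fan_zero_face[OF assms(1)] _ assms(2,3)] by auto
qed

lemma ray_form:
  assumes "\<rho> \<in> F" "aff_dim \<rho> = 1"
  shows "\<exists>w. w \<noteq> 0 \<and> \<rho> = {t *\<^sub>R w | t. 0 \<le> t}"
proof -
  have z: "0 \<in> \<rho>" using fan_zero assms(1) .
  have "\<rho> \<noteq> {0}" using assms(2) by auto
  then obtain w where w: "w \<in> \<rho>" "w \<noteq> 0" using z by blast
  have col: "collinear \<rho>" using assms(2) by (simp add: collinear_aff_dim)
  have "\<exists>t\<ge>0. x = t *\<^sub>R w" if x: "x \<in> \<rho>" for x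
  proof -
    have "collinear {0, w, x}" using collinear_subset[OF col] z w x by auto
    then obtain c where c: "x = c *\<^sub>R w" using collinear_lemma w(2) by (metis scale_zero_left)
    show ?thesis
    proof (cases "c \<ge> 0")
      case True then show ?thesis using c by blast
    next
      case False
      have "(-c) *\<^sub>R w \<in> \<rho>" using fan_scale[OF assms(1) w(1), of "-c"] False by linarith
      then have "x = 0" using fan_pointed[OF assms(1) x, of "(-c) *\<^sub>R w"] c by simp
      then show ?thesis by (intro exI[of _ 0]) simp
    qed
  qed
  moreover have "t *\<^sub>R w \<in> \<rho>" if "0 \<le> t" for t using fan_scale[OF assms(1) w(1) that] .
  ultimately show ?thesis using w(2) by (intro exI[of _ w]) blast
qed

lemma ray_gen_prop:
  assumes "\<rho> \<in> F" "aff_dim \<rho> = 1"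
  shows "ray_gen \<rho> \<noteq> 0" "\<rho> = {t *\<^sub>R ray_gen \<rho> | t. 0 \<le> t}"
proof -
  obtain w where w: "w \<noteq> 0" "\<rho> = {t *\<^sub>R w | t. 0 \<le> t}" using ray_form[OF assms] by blast
  define u where "u = (1 / norm w) *\<^sub>R w"
  have nu: "norm u = 1" using w(1) by (simp add: u_def)
  have "{t *\<^sub>R u | t. 0 \<le> (t::real)} = {t *\<^sub>R w | t. 0 \<le> t}"
  proof (intro set_eqI iffI)
    fix x assume "x \<in> {t *\<^sub>R u | t. 0 \<le> (t::real)}"
    then obtain t where "0 \<le> t" "x = t *\<^sub>R u" by blast
    then show "x \<in> {t *\<^sub>R w | t. 0 \<le> t}" unfolding u_def by (intro CollectI exI[of _ "t / norm w"]) auto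
  next
    fix x assume "x \<in> {t *\<^sub>R w | t. 0 \<le> (t::real)}"
    then obtain t where "0 \<le> t" "x = t *\<^sub>R w" by blast
    then show "x \<in> {t *\<^sub>R u | t. 0 \<le> t}" unfolding u_def using w(1) by (intro CollectI exI[of _ "t * norm w"]) auto
  qed
  then have "norm u = 1 \<and> \<rho> = pos_hull {u}" using nu w(2) by (simp add: ph_sing)
  then have rg: "norm (ray_gen \<rho>) = 1 \<and> \<rho> = pos_hull {ray_gen \<rho>}" unfolding ray_gen_def by (rule someI)
  then show "ray_gen \<rho> \<noteq> 0" by auto
  show "\<rho> = {t *\<^sub>R ray_gen \<rho> | t. 0 \<le> t}" using rg by (simp add: ph_sing)
qed

end


unbundle cross3_syntax

context
  fixes F :: "vec3 set set"
  assumes fan: "is_fan F"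
begin

context
  fixes \<tau> :: "vec3 set"
  assumes tauF: "\<tau> \<in> F" and tau2: "aff_dim \<tau> = 2"
begin

lemma normal_prop: "normal2 \<tau> \<noteq> 0" "\<And>x. x \<in> \<tau> \<Longrightarrow> normal2 \<tau> \<bullet> x = 0"
proof -
  have "0 \<in> affine hull \<tau>" by (rule hull_inc[OF fan_zero[OF fan tauF]])
  then have "aff_dim \<tau> = int (dim \<tau>)" by (rule aff_dim_zero)
  then have "dim \<tau> = 2" using tau2 by simp
  then have "dim \<tau> < DIM(vec3)" by simp
  then obtain a :: vec3 where a: "a \<noteq> 0" "span \<tau> \<subseteq> {x. a \<bullet> x = 0}"
    using lowdim_subset_hyperplane[of \<tau>] by blast
  have "a \<bullet> x = 0" if "x \<in> \<tau>" for x
  proof -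
    have "x \<in> span \<tau>" using that by (rule span_base)
    then show ?thesis using a(2) by blast
  qed
  then have "a \<noteq> 0 \<and> (\<forall>x\<in>\<tau>. a \<bullet> x = 0)" using a(1) by blast
  then have nn: "normal2 \<tau> \<noteq> 0 \<and> (\<forall>x\<in>\<tau>. normal2 \<tau> \<bullet> x = 0)"
    unfolding normal2_def by (rule someI[where P = "\<lambda>n. n \<noteq> 0 \<and> (\<forall>x\<in>\<tau>. n \<bullet> x = 0)"])
  show "normal2 \<tau> \<noteq> 0" using nn by blast
  show "\<And>x. x \<in> \<tau> \<Longrightarrow> normal2 \<tau> \<bullet> x = 0" using nn by blast
qed

lemma not_all_mults: "\<not> (\<forall>x\<in>\<tau>. \<exists>c. x = c *\<^sub>R w)"
proof
  assume "\<forall>x\<in>\<tau>. \<exists>c. x = c *\<^sub>R w"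
  then have "collinear \<tau>" by (rule collinear_of_mults)
  then show False using tau2 by (simp add: collinear_aff_dim)
qed

lemma D_zero_mult:
  assumes "x \<in> \<tau>" "y \<in> \<tau>" "normal2 \<tau> \<bullet> (x \<times> y) = 0" "x \<noteq> 0"
  shows "\<exists>c. y = c *\<^sub>R x"
  using cross_zero_mult[OF cross_perp_zero[OF normal_prop(1) normal_prop(2)[OF assms(1)] normal_prop(2)[OF assms(2)] assms(3)] assms(4)] .

lemma D_antisym: "normal2 \<tau> \<bullet> (y \<times> x) = - (normal2 \<tau> \<bullet> (x \<times> y))"
  by (simp add: cross3_simps)

lemma D_identity:
  assumes "x \<in> \<tau>" "y \<in> \<tau>" "z \<in> \<tau>"
  shows "(normal2 \<tau> \<bullet> (y \<times> z)) *\<^sub>R x + (normal2 \<tau> \<bullet> (z \<times> x)) *\<^sub>R y + (normal2 \<tau> \<bullet> (x \<times> y)) *\<^sub>R z = 0"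
proof -
  let ?n = "normal2 \<tau>"
  have t0: "x \<bullet> (y \<times> z) = 0"
    using triple_perp_zero[OF normal_prop(1) normal_prop(2)[OF assms(1)] normal_prop(2)[OF assms(2)] normal_prop(2)[OF assms(3)]] .
  have e: "(y \<bullet> (z \<times> ?n)) *\<^sub>R x - (x \<bullet> (z \<times> ?n)) *\<^sub>R y + (x \<bullet> (y \<times> ?n)) *\<^sub>R z - (x \<bullet> (y \<times> z)) *\<^sub>R ?n = 0"
    by (rule four_identity)
  have 1: "y \<bullet> (z \<times> ?n) = ?n \<bullet> (y \<times> z)" by (simp add: cross3_simps)
  have 2: "x \<bullet> (z \<times> ?n) = - (?n \<bullet> (z \<times> x))" by (simp add: cross3_simps)
  have 3: "x \<bullet> (y \<times> ?n) = ?n \<bullet> (x \<times> y)" by (simp add: cross3_simps)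
  have "(?n \<bullet> (y \<times> z)) *\<^sub>R x - (- (?n \<bullet> (z \<times> x))) *\<^sub>R y + (?n \<bullet> (x \<times> y)) *\<^sub>R z - 0 *\<^sub>R ?n = 0"
    using e unfolding 1 2 3 t0 .
  then show ?thesis by simp
qed

lemma D_lin: "normal2 \<tau> \<bullet> ((a *\<^sub>R x + b *\<^sub>R y) \<times> u) = a * (normal2 \<tau> \<bullet> (x \<times> u)) + b * (normal2 \<tau> \<bullet> (y \<times> u))"
  by (simp add: cross_add_left cross_mult_left inner_add_right)

context
  fixes \<rho> :: "vec3 set"
  assumes rhoF: "\<rho> \<in> F" and rho1: "aff_dim \<rho> = 1" and rhosub: "\<rho> \<subseteq> \<tau>"
begin

lemma rho_face: "\<rho> face_of \<tau>"
  using fan_sub_face[OF fan tauF rhoF rhosub] .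

lemma u_props: "ray_gen \<rho> \<noteq> 0" "ray_gen \<rho> \<in> \<rho>" "ray_gen \<rho> \<in> \<tau>"
  "\<rho> = {t *\<^sub>R ray_gen \<rho> | t. 0 \<le> t}"
proof -
  show "ray_gen \<rho> \<noteq> 0" "\<rho> = {t *\<^sub>R ray_gen \<rho> | t. 0 \<le> t}" using ray_gen_prop[OF fan rhoF rho1] by auto
  then show "ray_gen \<rho> \<in> \<rho>" by (metis (mono_tags, lifting) mem_Collect_eq scaleR_one zero_le_one)
  then show "ray_gen \<rho> \<in> \<tau>" using rhosub by blast
qed

lemma rho_mem: "x \<in> \<rho> \<longleftrightarrow> (\<exists>t. 0 \<le> t \<and> x = t *\<^sub>R ray_gen \<rho>)"
proof -
  have "x \<in> \<rho> \<longleftrightarrow> x \<in> {t *\<^sub>R ray_gen \<rho> | t. 0 \<le> t}" by (rule arg_cong[where f="\<lambda>S. x \<in> S", OF u_props(4)])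
  also have "\<dots> \<longleftrightarrow> (\<exists>t. 0 \<le> t \<and> x = t *\<^sub>R ray_gen \<rho>)" by blast
  finally show ?thesis .
qed

lemma q_exists: "\<exists>q. q \<in> \<tau> \<and> q \<notin> span \<rho>"
proof (rule ccontr)
  assume "\<not> ?thesis"
  then have "\<forall>x\<in>\<tau>. x \<in> span \<rho>" by blast
  moreover have "span \<rho> \<subseteq> span {ray_gen \<rho>}"
  proof (rule span_minimal)
    show "\<rho> \<subseteq> span {ray_gen \<rho>}"
    proof
      fix x assume "x \<in> \<rho>"
      then obtain t where "x = t *\<^sub>R ray_gen \<rho>" using rho_mem by blast
      then show "x \<in> span {ray_gen \<rho>}" using span_sing_iff by blast
    qed
  qed (rule subspace_span)
  ultimately have "\<forall>x\<in>\<tau>. \<exists>c. x = c *\<^sub>R ray_gen \<rho>" using span_sing_iff by blast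
  then show False using not_all_mults by blast
qed

definition qq where "qq = (SOME q. q \<in> \<tau> \<and> q \<notin> span \<rho>)"

lemma qq_props: "qq \<in> \<tau>" "qq \<notin> span \<rho>"
  using someI_ex[OF q_exists] unfolding qq_def by auto

lemma incid_eq: "incid \<tau> \<rho> = neg_sign (normal2 \<tau> \<bullet> (qq \<times> ray_gen \<rho>))"
  unfolding incid_def det3_def dot_cross_det[symmetric] qq_def using tau2 rho1 by simp

lemma D_qq_nz: "normal2 \<tau> \<bullet> (qq \<times> ray_gen \<rho>) \<noteq> 0"
proof
  assume "normal2 \<tau> \<bullet> (qq \<times> ray_gen \<rho>) = 0"
  then have "normal2 \<tau> \<bullet> (ray_gen \<rho> \<times> qq) = 0" using D_antisym[where x=qq and y="ray_gen \<rho>"] by linarith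
  then obtain c where "qq = c *\<^sub>R ray_gen \<rho>" using D_zero_mult[OF u_props(3) qq_props(1) _ u_props(1)] by blast
  then have "qq \<in> span \<rho>" using u_props(2) by (simp add: span_base span_mul)
  then show False using qq_props(2) by blast
qed

lemma sign_const:
  assumes x: "x \<in> \<tau>" and y: "y \<in> \<tau>"
  shows "\<not> (normal2 \<tau> \<bullet> (x \<times> ray_gen \<rho>) > 0 \<and> normal2 \<tau> \<bullet> (y \<times> ray_gen \<rho>) < 0)"
proof
  let ?n = "normal2 \<tau>" and ?u = "ray_gen \<rho>"
  assume h: "?n \<bullet> (x \<times> ?u) > 0 \<and> ?n \<bullet> (y \<times> ?u) < 0"
  define a where "a = - (?n \<bullet> (y \<times> ?u))"
  define b where "b = ?n \<bullet> (x \<times> ?u)"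
  have ab: "a > 0" "b > 0" using h by (auto simp: a_def b_def)
  define w where "w = a *\<^sub>R x + b *\<^sub>R y"
  have wt: "w \<in> \<tau>" unfolding w_def using ab by (intro fan_add[OF fan tauF] fan_scale[OF fan tauF] x y) auto
  have "?n \<bullet> (w \<times> ?u) = 0" unfolding w_def D_lin a_def b_def by simp
  then have "?n \<bullet> (?u \<times> w) = 0" using D_antisym[where x=w and y="?u"] by linarith
  then obtain t where t: "w = t *\<^sub>R ?u" using D_zero_mult[OF u_props(3) wt _ u_props(1)] by blast
  show False
  proof (cases "t \<ge> 0")
    case True
    have p: "(1 / (a + b)) *\<^sub>R w \<in> \<rho>"
    proof -
      have "(1 / (a + b)) *\<^sub>R w = (t / (a + b)) *\<^sub>R ?u" using t by simp
      moreover have "t / (a + b) \<ge> 0" using True ab by simp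
      ultimately show ?thesis using rho_mem by blast
    qed
    have xy: "x \<noteq> y" using h by auto
    have "(1 / (a + b)) *\<^sub>R w = (1 - b / (a + b)) *\<^sub>R x + (b / (a + b)) *\<^sub>R y"
      unfolding w_def using ab by (simp add: scaleR_add_right field_simps)
    moreover have "b / (a + b) > 0" "b / (a + b) < 1" using ab by (auto simp: field_simps)
    ultimately have "(1 / (a + b)) *\<^sub>R w \<in> open_segment x y" using xy in_segment(2) by blast
    then have "x \<in> \<rho>" using face_ofD[OF rho_face _ x y p] by blast
    then obtain s where "x = s *\<^sub>R ?u" using rho_mem by blast
    then have "?n \<bullet> (x \<times> ?u) = 0" by (simp add: cross_mult_left)
    then show False using h by simp
  next
    case False
    have "(-t) *\<^sub>R ?u \<in> \<tau>" using False by (intro fan_scale[OF fan tauF u_props(3)]) simp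
    moreover have "(-t) *\<^sub>R ?u + w = 0" using t by simp
    ultimately have "(-t) *\<^sub>R ?u = 0" using fan_pointed[OF fan tauF _ wt] by blast
    then show False using False u_props(1) by simp
  qed
qed

lemma incid_cases:
  "(incid \<tau> \<rho> = 1 \<and> (\<forall>x\<in>\<tau>. normal2 \<tau> \<bullet> (x \<times> ray_gen \<rho>) \<le> 0)) \<or>
   (incid \<tau> \<rho> = -1 \<and> (\<forall>x\<in>\<tau>. normal2 \<tau> \<bullet> (x \<times> ray_gen \<rho>) \<ge> 0))"
proof (cases "normal2 \<tau> \<bullet> (qq \<times> ray_gen \<rho>) > 0")
  case True
  have "normal2 \<tau> \<bullet> (x \<times> ray_gen \<rho>) \<ge> 0" if "x \<in> \<tau>" for x using sign_const[OF qq_props(1) that] True by linarith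
  then have "\<forall>x\<in>\<tau>. normal2 \<tau> \<bullet> (x \<times> ray_gen \<rho>) \<ge> 0" by blast
  then show ?thesis using True incid_eq by (simp add: neg_sign_def)
next
  case False
  then have "normal2 \<tau> \<bullet> (qq \<times> ray_gen \<rho>) < 0" using D_qq_nz by simp
  have "normal2 \<tau> \<bullet> (x \<times> ray_gen \<rho>) \<le> 0" if "x \<in> \<tau>" for x using sign_const[OF that qq_props(1)] \<open>_ < 0\<close> by linarith
  then have "\<forall>x\<in>\<tau>. normal2 \<tau> \<bullet> (x \<times> ray_gen \<rho>) \<le> 0" by blast
  then show ?thesis using \<open>_ < 0\<close> incid_eq by (simp add: neg_sign_def)
qed

end

end
end


unbundle cross3_syntax

lemma finite_minimal_rel:
  assumes "finite A" "a0 \<in> A"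
    and trans: "\<And>x y z. x \<in> A \<Longrightarrow> y \<in> A \<Longrightarrow> z \<in> A \<Longrightarrow> R x y \<Longrightarrow> R y z \<Longrightarrow> R x z"
    and irr: "\<And>x. x \<in> A \<Longrightarrow> \<not> R x x"
  shows "\<exists>m\<in>A. \<forall>x\<in>A. \<not> R x m"
proof -
  define pr where "pr v = {w\<in>A. R w v}" for v
  obtain m where m: "m \<in> A" "\<forall>y. y \<in> A \<longrightarrow> card (pr m) \<le> card (pr y)"
    using ex_has_least_nat[of "\<lambda>v. v \<in> A" a0 "\<lambda>v. card (pr v)"] assms(2) by blast
  have "\<not> R x m" if x: "x \<in> A" for x
  proof
    assume xm: "R x m"
    have "pr x \<subseteq> pr m" unfolding pr_def using trans[OF _ x m(1) _ xm] by blast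
    moreover have "x \<in> pr m" "x \<notin> pr x" unfolding pr_def using x xm irr[OF x] by auto
    ultimately have "pr x < pr m" by blast
    then have "card (pr x) < card (pr m)" using assms(1) by (intro psubset_card_mono) (auto simp: pr_def)
    then show False using m(2) x by fastforce
  qed
  then show ?thesis using m(1) by blast
qed

lemma triple_a: "(n \<times> v) \<bullet> x = n \<bullet> (v \<times> x)" for n v x :: vec3
  by (simp add: cross3_simps)

lemma triple_b: "(v \<times> n) \<bullet> x = n \<bullet> (x \<times> v)" for n v x :: vec3
  by (simp add: cross3_simps)

context
  fixes F :: "vec3 set set"
  assumes fan: "is_fan F"
begin

context
  fixes \<tau> :: "vec3 set"
  assumes tauF: "\<tau> \<in> F" and tau2: "aff_dim \<tau> = 2"
begin

lemma incid_pm: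
  assumes "\<rho> \<in> F" "aff_dim \<rho> = 1" "\<rho> \<subseteq> \<tau>"
  shows "incid \<tau> \<rho> = 1 \<or> incid \<tau> \<rho> = -1"
  using incid_cases[OF fan tauF tau2 assms] by blast

lemma opposite:
  assumes r1: "\<rho>1 \<in> F" "aff_dim \<rho>1 = 1" "\<rho>1 \<subseteq> \<tau>"
    and r2: "\<rho>2 \<in> F" "aff_dim \<rho>2 = 1" "\<rho>2 \<subseteq> \<tau>"
    and ne: "\<rho>1 \<noteq> \<rho>2"
  shows "incid \<tau> \<rho>1 \<noteq> incid \<tau> \<rho>2"
proof
  assume eq: "incid \<tau> \<rho>1 = incid \<tau> \<rho>2"
  let ?n = "normal2 \<tau>"
  define u1 where "u1 = ray_gen \<rho>1"
  define u2 where "u2 = ray_gen \<rho>2"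
  have u1: "u1 \<noteq> 0" "u1 \<in> \<tau>" using u_props[OF fan tauF tau2 r1] unfolding u1_def by auto
  have u2: "u2 \<noteq> 0" "u2 \<in> \<tau>" using u_props[OF fan tauF tau2 r2] unfolding u2_def by auto
  have c1: "(incid \<tau> \<rho>1 = 1 \<and> (\<forall>x\<in>\<tau>. ?n \<bullet> (x \<times> u1) \<le> 0)) \<or> (incid \<tau> \<rho>1 = -1 \<and> (\<forall>x\<in>\<tau>. ?n \<bullet> (x \<times> u1) \<ge> 0))"
    using incid_cases[OF fan tauF tau2 r1] unfolding u1_def .
  have c2: "(incid \<tau> \<rho>2 = 1 \<and> (\<forall>x\<in>\<tau>. ?n \<bullet> (x \<times> u2) \<le> 0)) \<or> (incid \<tau> \<rho>2 = -1 \<and> (\<forall>x\<in>\<tau>. ?n \<bullet> (x \<times> u2) \<ge> 0))"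
    using incid_cases[OF fan tauF tau2 r2] unfolding u2_def .
  have as: "?n \<bullet> (u2 \<times> u1) = - (?n \<bullet> (u1 \<times> u2))" using D_antisym[OF fan tauF tau2, where x=u1 and y=u2] .
  have "?n \<bullet> (u1 \<times> u2) = 0"
  proof (cases "incid \<tau> \<rho>1 = 1")
    case True
    then have "?n \<bullet> (u2 \<times> u1) \<le> 0" "?n \<bullet> (u1 \<times> u2) \<le> 0" using c1 c2 eq u1(2) u2(2) by auto
    then show ?thesis using as by linarith
  next
    case False
    then have "?n \<bullet> (u2 \<times> u1) \<ge> 0" "?n \<bullet> (u1 \<times> u2) \<ge> 0" using c1 c2 eq u1(2) u2(2) by auto
    then show ?thesis using as by linarith
  qed
  then obtain c where c: "u2 = c *\<^sub>R u1" using D_zero_mult[OF fan tauF tau2 u1(2) u2(2) _ u1(1)] by blast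
  show False
  proof (cases "c > 0")
    case True
    have "x \<in> \<rho>1 \<longleftrightarrow> x \<in> \<rho>2" for x
    proof -
      have "x \<in> \<rho>2 \<longleftrightarrow> (\<exists>t. 0 \<le> t \<and> x = t *\<^sub>R u2)" using rho_mem[OF fan tauF tau2 r2] unfolding u2_def .
      also have "\<dots> \<longleftrightarrow> (\<exists>t. 0 \<le> t \<and> x = t *\<^sub>R u1)"
      proof
        assume "\<exists>t. 0 \<le> t \<and> x = t *\<^sub>R u2"
        then obtain t where "0 \<le> t" "x = t *\<^sub>R u2" by blast
        then show "\<exists>t. 0 \<le> t \<and> x = t *\<^sub>R u1" using True c by (intro exI[of _ "t * c"]) simp
      next
        assume "\<exists>t. 0 \<le> t \<and> x = t *\<^sub>R u1"
        then obtain t where "0 \<le> t" "x = t *\<^sub>R u1" by blast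
        then show "\<exists>t. 0 \<le> t \<and> x = t *\<^sub>R u2" using True c by (intro exI[of _ "t / c"]) simp
      qed
      also have "\<dots> \<longleftrightarrow> x \<in> \<rho>1" using rho_mem[OF fan tauF tau2 r1] unfolding u1_def by simp
      finally show ?thesis by simp
    qed
    then have "\<rho>1 = \<rho>2" by blast
    then show False using ne by simp
  next
    case False
    have "(-c) *\<^sub>R u1 \<in> \<tau>" using False by (intro fan_scale[OF fan tauF u1(2)]) simp
    moreover have "u2 + (-c) *\<^sub>R u1 = 0" using c by simp
    ultimately have "u2 = 0" using fan_pointed[OF fan tauF u2(2)] by blast
    then show False using u2(1) by simp
  qed
qed

end
end


unbundle cross3_syntax

context
  fixes F :: "vec3 set set"
  assumes fan: "is_fan F"
begin

context
  fixes \<tau> :: "vec3 set"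
  assumes tauF: "\<tau> \<in> F" and tau2: "aff_dim \<tau> = 2"
begin

lemma face_ray:
  assumes v: "v \<in> \<tau>" "v \<noteq> 0"
    and H: "H = \<tau> \<inter> {x. a \<bullet> x = 0}"
    and ge: "\<And>x. x \<in> \<tau> \<Longrightarrow> a \<bullet> x \<ge> 0"
    and mult: "\<And>x. x \<in> H \<Longrightarrow> \<exists>k. x = k *\<^sub>R v"
    and vH: "v \<in> H"
  shows "H \<in> F" "aff_dim H = 1" "H \<subseteq> \<tau>"
proof -
  have "(\<tau> \<inter> {x. a \<bullet> x = 0}) face_of \<tau>"
    using face_of_Int_supporting_hyperplane_ge[OF fan_convex[OF fan tauF], where a=a and b=0] ge by simp
  then have fH: "H face_of \<tau>" using H by simp
  show "H \<in> F" using fan_face[OF fan tauF fH] vH by blast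
  have "collinear H" using mult by (intro collinear_of_mults) blast
  then have le: "aff_dim H \<le> 1" by (simp add: collinear_aff_dim)
  have "0 \<in> H" using H fan_zero[OF fan tauF] by simp
  then have "{0, v} \<subseteq> H" using vH by blast
  then have "aff_dim {0, v} \<le> aff_dim H" by (rule aff_dim_subset)
  then show "aff_dim H = 1" using le v(2) by simp
  show "H \<subseteq> \<tau>" using H by blast
qed

lemma two_rays_exist:
  "\<exists>\<rho>1 \<rho>2. \<rho>1 \<in> F \<and> aff_dim \<rho>1 = 1 \<and> \<rho>1 \<subseteq> \<tau> \<and> \<rho>2 \<in> F \<and> aff_dim \<rho>2 = 1 \<and> \<rho>2 \<subseteq> \<tau> \<and> \<rho>1 \<noteq> \<rho>2"
proof -
  let ?n = "normal2 \<tau>"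
  obtain V where V: "finite V" "\<tau> = pos_hull V" using fan_cone[OF fan tauF] by blast
  define A where "A = V - {0}"
  have VT: "v \<in> \<tau>" if "v \<in> V" for v using ph_gen[OF V(1) that] V(2) by simp
  have AT: "v \<in> \<tau>" "v \<noteq> 0" if "v \<in> A" for v using that VT unfolding A_def by auto
  have fA: "finite A" using V(1) unfolding A_def by simp
  have spanV: "\<tau> \<subseteq> span {w}" if "\<And>v. v \<in> A \<Longrightarrow> v \<in> span {w}" for w
  proof
    fix x assume "x \<in> \<tau>"
    then have "x \<in> pos_hull V" using V(2) by simp
    moreover have "V \<subseteq> span {w}"
    proof
      fix v assume "v \<in> V"
      then show "v \<in> span {w}" using that[of v] span_zero unfolding A_def by (cases "v = 0") auto
    qed
    ultimately show "x \<in> span {w}" by (rule ph_span)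
  qed
  have notspan: "\<not> \<tau> \<subseteq> span {w}" for w
  proof
    assume "\<tau> \<subseteq> span {w}"
    then have "\<forall>x\<in>\<tau>. \<exists>c. x = c *\<^sub>R w" using span_sing_iff by blast
    then show False using not_all_mults[OF fan tauF tau2] by blast
  qed
  have "A \<noteq> {}"
  proof
    assume "A = {}"
    then have "\<tau> \<subseteq> span {0}" using spanV[of 0] by blast
    then show False using notspan by blast
  qed
  then obtain a0 where a0: "a0 \<in> A" by blast
  have antis: "?n \<bullet> (y \<times> x) = - (?n \<bullet> (x \<times> y))" for x y using D_antisym[OF fan tauF tau2, where x=x and y=y] .
  have trans: "?n \<bullet> (x \<times> z) > 0" if "x \<in> A" "y \<in> A" "z \<in> A" "?n \<bullet> (x \<times> y) > 0" "?n \<bullet> (y \<times> z) > 0" for x y z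
  proof (rule ccontr)
    assume "\<not> ?thesis"
    then have zx: "?n \<bullet> (z \<times> x) \<ge> 0" using antis[of z x] by linarith
    have idt: "(?n \<bullet> (y \<times> z)) *\<^sub>R x + ((?n \<bullet> (z \<times> x)) *\<^sub>R y + (?n \<bullet> (x \<times> y)) *\<^sub>R z) = 0"
      using D_identity[OF fan tauF tau2 AT(1)[OF that(1)] AT(1)[OF that(2)] AT(1)[OF that(3)]] by (simp add: add.assoc)
    have "(?n \<bullet> (z \<times> x)) *\<^sub>R y + (?n \<bullet> (x \<times> y)) *\<^sub>R z \<in> \<tau>"
      using zx that by (intro fan_add[OF fan tauF] fan_scale[OF fan tauF] AT) auto
    moreover have "(?n \<bullet> (y \<times> z)) *\<^sub>R x \<in> \<tau>" using that by (intro fan_scale[OF fan tauF] AT) auto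
    ultimately have "(?n \<bullet> (y \<times> z)) *\<^sub>R x = 0" using fan_pointed[OF fan tauF _ _ idt] by blast
    then show False using that AT(2)[OF that(1)] by simp
  qed
  have irr: "\<not> ?n \<bullet> (x \<times> x) > 0" for x by simp
  obtain v1 where v1: "v1 \<in> A" "\<forall>x\<in>A. \<not> ?n \<bullet> (x \<times> v1) > 0"
    using finite_minimal_rel[OF fA a0, of "\<lambda>x y. ?n \<bullet> (x \<times> y) > 0"] trans irr by blast
  obtain v2 where v2: "v2 \<in> A" "\<forall>x\<in>A. \<not> ?n \<bullet> (v2 \<times> x) > 0"
    using finite_minimal_rel[OF fA a0, of "\<lambda>x y. ?n \<bullet> (y \<times> x) > 0"] trans irr by blast
  have g1: "?n \<bullet> (v1 \<times> x) \<ge> 0" if "x \<in> A" for x using v1(2) that antis[of x v1] by force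
  have g2: "?n \<bullet> (x \<times> v2) \<ge> 0" if "x \<in> A" for x using v2(2) that antis[of v2 x] by force
  have v1T: "v1 \<in> \<tau>" "v1 \<noteq> 0" using AT v1(1) by auto
  have v2T: "v2 \<in> \<tau>" "v2 \<noteq> 0" using AT v2(1) by auto
  have pos12: "?n \<bullet> (v1 \<times> v2) > 0"
  proof (rule ccontr)
    assume "\<not> ?thesis"
    then have z: "?n \<bullet> (v1 \<times> v2) = 0" using g1[OF v2(1)] by linarith
    then obtain c where c: "v2 = c *\<^sub>R v1" using D_zero_mult[OF fan tauF tau2 v1T(1) v2T(1) _ v1T(2)] by blast
    show False
    proof (cases "c > 0")
      case False
      have "(-c) *\<^sub>R v1 \<in> \<tau>" using False by (intro fan_scale[OF fan tauF v1T(1)]) simp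
      moreover have "v2 + (-c) *\<^sub>R v1 = 0" using c by simp
      ultimately have "v2 = 0" using fan_pointed[OF fan tauF v2T(1)] by blast
      then show False using v2T(2) by simp
    next
      case True
      have "v \<in> span {v1}" if vA: "v \<in> A" for v
      proof -
        have "?n \<bullet> (v \<times> v2) = c * (?n \<bullet> (v \<times> v1))" using c by (simp add: cross_mult_right)
        then have "?n \<bullet> (v \<times> v1) \<ge> 0" using g2[OF vA] True by (simp add: zero_le_mult_iff)
        moreover have "?n \<bullet> (v1 \<times> v) \<ge> 0" using g1[OF vA] .
        ultimately have "?n \<bullet> (v1 \<times> v) = 0" using antis[of v1 v] by linarith
        then obtain k where "v = k *\<^sub>R v1" using D_zero_mult[OF fan tauF tau2 v1T(1) AT(1)[OF vA] _ v1T(2)] by blast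
        then show ?thesis using span_sing_iff by blast
      qed
      then show False using spanV notspan by blast
    qed
  qed
  have G1: "(?n \<times> v1) \<bullet> x \<ge> 0" if "x \<in> \<tau>" for x
  proof -
    have "x \<in> pos_hull V" using that V(2) by simp
    moreover have "0 \<le> (?n \<times> v1) \<bullet> v" if "v \<in> V" for v
      using g1[of v] that unfolding triple_a A_def by (cases "v = 0") auto
    ultimately show ?thesis by (rule ph_linear_nonneg)
  qed
  have G2: "(v2 \<times> ?n) \<bullet> x \<ge> 0" if "x \<in> \<tau>" for x
  proof -
    have "x \<in> pos_hull V" using that V(2) by simp
    moreover have "0 \<le> (v2 \<times> ?n) \<bullet> v" if "v \<in> V" for v
      using g2[of v] that unfolding triple_b A_def by (cases "v = 0") auto
    ultimately show ?thesis by (rule ph_linear_nonneg)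
  qed
  define H1 where "H1 = \<tau> \<inter> {x. (?n \<times> v1) \<bullet> x = 0}"
  define H2 where "H2 = \<tau> \<inter> {x. (v2 \<times> ?n) \<bullet> x = 0}"
  have m1: "\<exists>k. x = k *\<^sub>R v1" if "x \<in> H1" for x
  proof -
    have "x \<in> \<tau>" "?n \<bullet> (v1 \<times> x) = 0" using that unfolding H1_def triple_a by auto
    then show ?thesis using D_zero_mult[OF fan tauF tau2 v1T(1) _ _ v1T(2)] by blast
  qed
  have m2: "\<exists>k. x = k *\<^sub>R v2" if "x \<in> H2" for x
  proof -
    have "x \<in> \<tau>" "?n \<bullet> (x \<times> v2) = 0" using that unfolding H2_def triple_b by auto
    then have "x \<in> \<tau>" "?n \<bullet> (v2 \<times> x) = 0" using antis[of x v2] by auto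
    then show ?thesis using D_zero_mult[OF fan tauF tau2 v2T(1) _ _ v2T(2)] by blast
  qed
  have v1H: "v1 \<in> H1" unfolding H1_def triple_a using v1T by simp
  have v2H: "v2 \<in> H2" unfolding H2_def triple_b using v2T by simp
  have v1H2: "v1 \<notin> H2" unfolding H2_def triple_b using pos12 by simp
  have R1: "H1 \<in> F" "aff_dim H1 = 1" "H1 \<subseteq> \<tau>" using face_ray[OF v1T H1_def G1 m1 v1H] by auto
  have R2: "H2 \<in> F" "aff_dim H2 = 1" "H2 \<subseteq> \<tau>" using face_ray[OF v2T H2_def G2 m2 v2H] by auto
  show ?thesis using R1 R2 v1H v1H2 by blast
qed

lemma rays_of_2cone:
  "\<exists>\<rho>1 \<rho>2. \<rho>1 \<in> cones_dim F 1 \<and> \<rho>2 \<in> cones_dim F 1 \<and> \<rho>1 \<noteq> \<rho>2 \<and>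
     {\<rho> \<in> cones_dim F 1. \<rho> \<subseteq> \<tau>} = {\<rho>1, \<rho>2} \<and> incid \<tau> \<rho>1 = 1 \<and> incid \<tau> \<rho>2 = -1"
proof -
  obtain a b where ab: "a \<in> F" "aff_dim a = 1" "a \<subseteq> \<tau>" "b \<in> F" "aff_dim b = 1" "b \<subseteq> \<tau>" "a \<noteq> b"
    using two_rays_exist by blast
  have ia: "incid \<tau> a = 1 \<or> incid \<tau> a = -1" using incid_pm[OF fan tauF tau2 ab(1-3)] .
  have ib: "incid \<tau> b = 1 \<or> incid \<tau> b = -1" using incid_pm[OF fan tauF tau2 ab(4-6)] .
  have nab: "incid \<tau> a \<noteq> incid \<tau> b" using opposite[OF fan tauF tau2 ab(1-3) ab(4-6) ab(7)] .
  have only: "\<rho> = a \<or> \<rho> = b" if "\<rho> \<in> F" "aff_dim \<rho> = 1" "\<rho> \<subseteq> \<tau>" for \<rho>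
  proof (rule ccontr)
    assume "\<not> ?thesis"
    then have "incid \<tau> \<rho> \<noteq> incid \<tau> a" "incid \<tau> \<rho> \<noteq> incid \<tau> b"
      using opposite[OF fan tauF tau2 that ab(1-3)] opposite[OF fan tauF tau2 that ab(4-6)] by auto
    moreover have "incid \<tau> \<rho> = 1 \<or> incid \<tau> \<rho> = -1" using incid_pm[OF fan tauF tau2 that] .
    ultimately show False using ia ib nab by auto
  qed
  have S: "{\<rho> \<in> cones_dim F 1. \<rho> \<subseteq> \<tau>} = {a, b}"
    using only ab unfolding cones_dim_def by auto
  have ca: "a \<in> cones_dim F 1" "b \<in> cones_dim F 1" using ab unfolding cones_dim_def by auto
  show ?thesis
  proof (cases "incid \<tau> a = 1")
    case True
    then have "incid \<tau> b = -1" using ib nab by auto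
    then show ?thesis using True S ca ab(7) by blast
  next
    case False
    then have i2: "incid \<tau> a = -1" "incid \<tau> b = 1" using ia ib nab by auto
    have S': "{\<rho> \<in> cones_dim F 1. \<rho> \<subseteq> \<tau>} = {b, a}" using S by blast
    have "b \<noteq> a" using ab(7) by simp
    then show ?thesis using S' ca i2 by blast
  qed
qed

end
end


definition Tset :: "vec3 set set \<Rightarrow> vec3 set \<Rightarrow> vec3 set set" where
  "Tset F \<rho> = {\<tau>\<in>cones_dim F 2. \<rho> \<subseteq> \<tau>}"
definition Rset :: "vec3 set set \<Rightarrow> vec3 set \<Rightarrow> vec3 set set" where
  "Rset F \<tau> = {\<rho>\<in>cones_dim F 1. \<rho> \<subseteq> \<tau>}"
definition LL :: "nat \<Rightarrow> vec3 set \<Rightarrow> poly3" where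
  "LL r \<tau> = l_form \<tau> ^ (r + 1)"

lemma sum_sing: "(\<Sum>x\<in>{a}. g x) = g a" by simp

context
  fixes F :: "vec3 set set"
  assumes fan: "is_fan F"
begin

lemma fin_cd: "finite (cones_dim F i)"
  using fan_finite[OF fan] unfolding cones_dim_def by simp

lemma cd_F: "C \<in> cones_dim F i \<Longrightarrow> C \<in> F"
  unfolding cones_dim_def by simp

lemma cd_dim: "C \<in> cones_dim F i \<Longrightarrow> aff_dim C = int i"
  unfolding cones_dim_def by simp

lemma bdry_index_ray:
  assumes "\<rho> \<in> cones_dim F 1"
  shows "{\<gamma>\<in>F. \<rho> face_of \<gamma> \<and> aff_dim \<gamma> = aff_dim \<rho> + 1} = Tset F \<rho>"
proof -
  have d: "aff_dim \<rho> = 1" "\<rho> \<in> F" using assms unfolding cones_dim_def by auto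
  show ?thesis
  proof (intro set_eqI iffI)
    fix \<gamma> assume "\<gamma> \<in> {\<gamma>\<in>F. \<rho> face_of \<gamma> \<and> aff_dim \<gamma> = aff_dim \<rho> + 1}"
    then show "\<gamma> \<in> Tset F \<rho>" using d face_of_imp_subset unfolding Tset_def cones_dim_def by fastforce
  next
    fix \<gamma> assume g: "\<gamma> \<in> Tset F \<rho>"
    then have "\<gamma> \<in> F" "aff_dim \<gamma> = 2" "\<rho> \<subseteq> \<gamma>" unfolding Tset_def cones_dim_def by auto
    then show "\<gamma> \<in> {\<gamma>\<in>F. \<rho> face_of \<gamma> \<and> aff_dim \<gamma> = aff_dim \<rho> + 1}"
      using fan_sub_face[OF fan _ d(2)] d(1) by simp
  qed
qed

lemma bdry_ray:
  assumes "\<rho> \<in> cones_dim F 1"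
  shows "bdry F a \<rho> = (\<Sum>\<tau>\<in>Tset F \<rho>. of_int (incid \<tau> \<rho>) * a \<tau>)"
  using bdry_index_ray[OF assms] cd_F[OF assms] unfolding bdry_def by simp

lemma dim0_is_zero:
  assumes "\<gamma> \<in> F" "aff_dim \<gamma> = 0"
  shows "\<gamma> = {0}"
proof -
  obtain p where "\<gamma> = {p}" using assms(2) aff_dim_eq_0 by blast
  then show ?thesis using fan_zero[OF fan assms(1)] by simp
qed

lemma bdry_index_zero:
  assumes "\<gamma>' \<in> F" "aff_dim \<gamma>' = 0"
  shows "{\<gamma>\<in>F. \<gamma>' face_of \<gamma> \<and> aff_dim \<gamma> = aff_dim \<gamma>' + 1} = cones_dim F 1"
  using dim0_is_zero[OF assms] assms(2) fan_zero_face[OF fan] unfolding cones_dim_def by auto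

lemma bdry_chain1:
  assumes a: "a \<in> chains F 1" and g: "\<gamma>' \<in> F"
  shows "bdry F a \<gamma>' = (if aff_dim \<gamma>' = 0 then - (\<Sum>\<rho>\<in>cones_dim F 1. a \<rho>) else 0)"
proof (cases "aff_dim \<gamma>' = 0")
  case True
  have "bdry F a \<gamma>' = (\<Sum>\<gamma>\<in>cones_dim F 1. of_int (incid \<gamma> \<gamma>') * a \<gamma>)"
    unfolding bdry_def using g bdry_index_zero[OF g True] by simp
  also have "\<dots> = (\<Sum>\<gamma>\<in>cones_dim F 1. - a \<gamma>)"
    by (rule sum.cong) (use True in \<open>auto simp: incid_def cones_dim_def\<close>)
  finally show ?thesis using True by (simp add: sum_negf)
next
  case False
  have "bdry F a \<gamma>' = (\<Sum>\<gamma>\<in>{\<gamma>\<in>F. \<gamma>' face_of \<gamma> \<and> aff_dim \<gamma> = aff_dim \<gamma>' + 1}. of_int (incid \<gamma> \<gamma>') * a \<gamma>)"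
    unfolding bdry_def using g by simp
  also have "\<dots> = 0"
  proof (rule sum.neutral, rule ballI)
    fix \<gamma> assume "\<gamma> \<in> {\<gamma>\<in>F. \<gamma>' face_of \<gamma> \<and> aff_dim \<gamma> = aff_dim \<gamma>' + 1}"
    then have "\<gamma> \<notin> cones_dim F 1" using False unfolding cones_dim_def by auto
    then have "a \<gamma> = 0" using a unfolding chains_def by blast
    then show "of_int (incid \<gamma> \<gamma>') * a \<gamma> = 0" by simp
  qed
  finally show ?thesis using False by simp
qed

lemma cycle_iff:
  assumes a: "a \<in> chains F 1"
  shows "bdry F a = (\<lambda>_. 0) \<longleftrightarrow> (\<Sum>\<rho>\<in>cones_dim F 1. a \<rho>) = 0"
proof
  assume b: "bdry F a = (\<lambda>_. 0)"
  show "(\<Sum>\<rho>\<in>cones_dim F 1. a \<rho>) = 0"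
  proof (cases "cones_dim F 1 = {}")
    case True then show ?thesis by simp
  next
    case False
    then obtain \<rho> where "\<rho> \<in> cones_dim F 1" by blast
    then have "{0} \<in> F" using fan_face[OF fan cd_F fan_zero_face[OF fan cd_F]] by blast
    then have "bdry F a {0} = - (\<Sum>\<rho>\<in>cones_dim F 1. a \<rho>)" using bdry_chain1[OF a] by simp
    then show ?thesis using b by (metis neg_equal_0_iff_equal)
  qed
next
  assume s: "(\<Sum>\<rho>\<in>cones_dim F 1. a \<rho>) = 0"
  show "bdry F a = (\<lambda>_. 0)"
  proof
    fix \<gamma>' show "bdry F a \<gamma>' = 0"
      using bdry_chain1[OF a, of \<gamma>'] s by (cases "\<gamma>' \<in> F") (auto simp: bdry_def)
  qed
qed

lemma unique_2cone:
  assumes "\<tau> \<in> cones_dim F 2" "\<tau>' \<in> cones_dim F 2" "\<tau> \<subseteq> \<tau>'"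
  shows "\<tau> = \<tau>'"
proof (rule ccontr)
  assume ne: "\<tau> \<noteq> \<tau>'"
  have "\<tau> face_of \<tau>'" using fan_sub_face[OF fan cd_F[OF assms(2)] cd_F[OF assms(1)] assms(3)] .
  then have "aff_dim \<tau> < aff_dim \<tau>'" using face_of_aff_dim_lt[OF fan_convex[OF fan cd_F[OF assms(2)]] _ ne] by blast
  then show False using cd_dim[OF assms(1)] cd_dim[OF assms(2)] by simp
qed

lemma Jid_ray:
  assumes "\<rho> \<in> cones_dim F 1"
  shows "Jid F r \<rho> = {(\<Sum>\<tau>\<in>Tset F \<rho>. f \<tau> * LL r \<tau>) | f. True}"
  using cd_dim[OF assms] unfolding Jid_def Tset_def LL_def by simp

lemma Jid_2cone:
  assumes "\<tau> \<in> cones_dim F 2"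
  shows "Jid F r \<tau> = {c * LL r \<tau> | c. True}"
proof -
  have s: "{\<tau>'\<in>cones_dim F 2. \<tau> \<subseteq> \<tau>'} = {\<tau>}" using unique_2cone[OF assms] assms by blast
  have d: "aff_dim \<tau> \<noteq> 3" using cd_dim[OF assms] by simp
  have "Jid F r \<tau> = {f \<tau> * LL r \<tau> | f. True}"
    unfolding Jid_def s if_not_P[OF d] sum_sing LL_def ..
  also have "\<dots> = {c * LL r \<tau> | c. True}"
  proof (rule set_eqI, rule iffI)
    fix u assume "u \<in> {f \<tau> * LL r \<tau> | f. True}" then show "u \<in> {c * LL r \<tau> | c. True}" by blast
  next
    fix u assume "u \<in> {c * LL r \<tau> | c. True}" then obtain c where "u = c * LL r \<tau>" by blast
    then show "u \<in> {f \<tau> * LL r \<tau> | f. True}" by (intro CollectI exI[of _ "\<lambda>_. c"]) simp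
  qed
  finally show ?thesis .
qed

lemma swap:
  "(\<Sum>\<tau>\<in>cones_dim F 2. \<Sum>\<rho>\<in>Rset F \<tau>. h \<rho> \<tau>) = (\<Sum>\<rho>\<in>cones_dim F 1. \<Sum>\<tau>\<in>Tset F \<rho>. h \<rho> \<tau>)"
  unfolding Rset_def Tset_def by (rule sum.swap_restrict[OF fin_cd fin_cd])

lemma rays_choice:
  obtains r1 r2 where "\<And>\<tau>. \<tau> \<in> cones_dim F 2 \<Longrightarrow> r1 \<tau> \<in> cones_dim F 1 \<and> r2 \<tau> \<in> cones_dim F 1 \<and> r1 \<tau> \<noteq> r2 \<tau> \<and>
     Rset F \<tau> = {r1 \<tau>, r2 \<tau>} \<and> incid \<tau> (r1 \<tau>) = 1 \<and> incid \<tau> (r2 \<tau>) = -1"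
proof -
  have "\<forall>\<tau>\<in>cones_dim F 2. \<exists>p. fst p \<in> cones_dim F 1 \<and> snd p \<in> cones_dim F 1 \<and> fst p \<noteq> snd p \<and>
     Rset F \<tau> = {fst p, snd p} \<and> incid \<tau> (fst p) = 1 \<and> incid \<tau> (snd p) = -1"
  proof
    fix \<tau> assume t: "\<tau> \<in> cones_dim F 2"
    obtain a b where "a \<in> cones_dim F 1 \<and> b \<in> cones_dim F 1 \<and> a \<noteq> b \<and>
     {\<rho> \<in> cones_dim F 1. \<rho> \<subseteq> \<tau>} = {a, b} \<and> incid \<tau> a = 1 \<and> incid \<tau> b = -1"
      using rays_of_2cone[OF fan cd_F[OF t] cd_dim[OF t, simplified]] by blast
    then show "\<exists>p. fst p \<in> cones_dim F 1 \<and> snd p \<in> cones_dim F 1 \<and> fst p \<noteq> snd p \<and>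
     Rset F \<tau> = {fst p, snd p} \<and> incid \<tau> (fst p) = 1 \<and> incid \<tau> (snd p) = -1"
      unfolding Rset_def by (intro exI[of _ "(a, b)"]) simp
  qed
  then obtain P where "\<forall>\<tau>\<in>cones_dim F 2. fst (P \<tau>) \<in> cones_dim F 1 \<and> snd (P \<tau>) \<in> cones_dim F 1 \<and> fst (P \<tau>) \<noteq> snd (P \<tau>) \<and>
     Rset F \<tau> = {fst (P \<tau>), snd (P \<tau>)} \<and> incid \<tau> (fst (P \<tau>)) = 1 \<and> incid \<tau> (snd (P \<tau>)) = -1"
    by (rule bchoice[elim_format]) blast
  then show ?thesis using that[of "\<lambda>\<tau>. fst (P \<tau>)" "\<lambda>\<tau>. snd (P \<tau>)"] by blast
qed

end


definition repf :: "vec3 set set \<Rightarrow> nat \<Rightarrow> (vec3 set \<Rightarrow> poly3) \<Rightarrow> vec3 set \<Rightarrow> vec3 set \<Rightarrow> poly3" where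
  "repf F r z \<rho> = (SOME f. z \<rho> = (\<Sum>\<tau>\<in>Tset F \<rho>. f \<tau> * LL r \<tau>))"

definition Gm :: "vec3 set set \<Rightarrow> (vec3 set \<Rightarrow> vec3 set \<Rightarrow> poly3) \<Rightarrow> vec3 set \<Rightarrow> poly3" where
  "Gm F f = (\<lambda>\<tau>. if \<tau> \<in> cones_dim F 2 then (\<Sum>\<rho>\<in>Rset F \<tau>. f \<rho> \<tau>) else 0)"

definition gmap :: "vec3 set set \<Rightarrow> nat \<Rightarrow> (vec3 set \<Rightarrow> poly3) \<Rightarrow> vec3 set \<Rightarrow> poly3" where
  "gmap F r z = Gm F (repf F r z)"

lemma Gm_diff: "Gm F (\<lambda>\<rho> \<tau>. f \<rho> \<tau> - h \<rho> \<tau>) \<tau> = Gm F f \<tau> - Gm F h \<tau>"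
  by (simp add: Gm_def sum_subtractf)

lemma Gm_add: "Gm F (\<lambda>\<rho> \<tau>. f \<rho> \<tau> + h \<rho> \<tau>) \<tau> = Gm F f \<tau> + Gm F h \<tau>"
  by (simp add: Gm_def sum.distrib)

lemma Gm_mult: "Gm F (\<lambda>\<rho> \<tau>. c * f \<rho> \<tau>) \<tau> = c * Gm F f \<tau>"
  by (simp add: Gm_def sum_distrib_left)

lemma zero_Jid: "0 \<in> Jid F r \<gamma>"
  unfolding Jid_def by (auto intro!: exI[of _ "\<lambda>_. 0"])

context
  fixes F :: "vec3 set set" and r :: nat
  assumes fan: "is_fan F"
begin

lemma Rset_fin: "finite (Rset F \<tau>)"
  unfolding Rset_def using fin_cd[OF fan] by simp

lemma Tset_fin: "finite (Tset F \<rho>)"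
  unfolding Tset_def using fin_cd[OF fan] by simp

lemma repf_ok:
  assumes "\<rho> \<in> cones_dim F 1" "z \<rho> \<in> Jid F r \<rho>"
  shows "z \<rho> = (\<Sum>\<tau>\<in>Tset F \<rho>. repf F r z \<rho> \<tau> * LL r \<tau>)"
proof -
  have "\<exists>f. z \<rho> = (\<Sum>\<tau>\<in>Tset F \<rho>. f \<tau> * LL r \<tau>)" using assms(2) unfolding Jid_ray[OF fan assms(1)] by blast
  then show ?thesis unfolding repf_def by (rule someI_ex)
qed

lemma repr_Jid:
  assumes "\<rho> \<in> cones_dim F 1" "p = (\<Sum>\<tau>\<in>Tset F \<rho>. f \<tau> * LL r \<tau>)"
  shows "p \<in> Jid F r \<rho>"
  unfolding Jid_ray[OF fan assms(1)] using assms(2) by blast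

lemma K1:
  assumes h1: "\<And>\<rho>. \<rho> \<in> cones_dim F 1 \<Longrightarrow> p \<rho> = (\<Sum>\<tau>\<in>Tset F \<rho>. f1 \<rho> \<tau> * LL r \<tau>)"
    and h2: "\<And>\<rho>. \<rho> \<in> cones_dim F 1 \<Longrightarrow> p \<rho> = (\<Sum>\<tau>\<in>Tset F \<rho>. f2 \<rho> \<tau> * LL r \<tau>)"
  shows "(\<lambda>\<tau>. Gm F f1 \<tau> - Gm F f2 \<tau>) \<in> Kr F r"
proof -
  define k where "k \<rho> \<tau> = (if \<tau> \<in> Tset F \<rho> then f1 \<rho> \<tau> - f2 \<rho> \<tau> else 0)" for \<rho> \<tau>
  have kv: "k \<rho> \<in> Kv F r \<rho>" if \<rho>: "\<rho> \<in> cones_dim F 1" for \<rho>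
  proof -
    have "(\<Sum>\<tau>\<in>Tset F \<rho>. k \<rho> \<tau> * LL r \<tau>) = (\<Sum>\<tau>\<in>Tset F \<rho>. f1 \<rho> \<tau> * LL r \<tau> - f2 \<rho> \<tau> * LL r \<tau>)"
      by (rule sum.cong) (auto simp: k_def algebra_simps)
    also have "\<dots> = p \<rho> - p \<rho>" using h1[OF \<rho>] h2[OF \<rho>] by (simp add: sum_subtractf)
    finally have s: "(\<Sum>\<tau>\<in>Tset F \<rho>. k \<rho> \<tau> * LL r \<tau>) = 0" by simp
    show ?thesis unfolding Kv_def chains_def
      using s unfolding Tset_def LL_def by (auto simp: k_def Tset_def)
  qed
  have eq: "Gm F f1 \<tau> - Gm F f2 \<tau> = (\<Sum>v\<in>cones_dim F 1. k v \<tau>)" for \<tau>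
  proof (cases "\<tau> \<in> cones_dim F 2")
    case True
    have "(\<Sum>v\<in>cones_dim F 1. k v \<tau>) = (\<Sum>v\<in>cones_dim F 1. if v \<subseteq> \<tau> then f1 v \<tau> - f2 v \<tau> else 0)"
      by (rule sum.cong) (use True in \<open>auto simp: k_def Tset_def\<close>)
    also have "\<dots> = (\<Sum>v\<in>Rset F \<tau>. f1 v \<tau> - f2 v \<tau>)"
      unfolding Rset_def by (rule sum.inter_filter[symmetric, OF fin_cd[OF fan]])
    finally show ?thesis using True by (simp add: Gm_def sum_subtractf)
  next
    case False
    then show ?thesis by (simp add: Gm_def k_def Tset_def)
  qed
  show ?thesis unfolding Kr_def
    by (rule CollectI, rule exI[of _ k]) (use kv eq in auto)
qed

lemma Kr_sub_Vr: "Kr F r \<subseteq> Vr F r"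
proof
  fix x assume "x \<in> Kr F r"
  then obtain k where k: "\<forall>v\<in>cones_dim F 1. k v \<in> Kv F r v" "x = (\<lambda>\<tau>. \<Sum>v\<in>cones_dim F 1. k v \<tau>)"
    unfolding Kr_def by blast
  have kz: "k v \<tau> = 0" if "v \<in> cones_dim F 1" "\<tau> \<notin> cones_dim F 2 \<or> \<not> v \<subseteq> \<tau>" for v \<tau>
    using k(1) that unfolding Kv_def chains_def by blast
  have ks: "(\<Sum>\<tau>\<in>{\<tau>\<in>cones_dim F 2. v \<subseteq> \<tau>}. k v \<tau> * l_form \<tau> ^ (r + 1)) = 0" if "v \<in> cones_dim F 1" for v
    using k(1) that unfolding Kv_def by blast
  have ch: "x \<in> chains F 2" unfolding chains_def k(2) using kz by auto
  have "(\<Sum>\<tau>\<in>cones_dim F 2. x \<tau> * l_form \<tau> ^ (r + 1))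
      = (\<Sum>v\<in>cones_dim F 1. \<Sum>\<tau>\<in>cones_dim F 2. k v \<tau> * l_form \<tau> ^ (r + 1))"
    unfolding k(2) by (simp add: sum_distrib_right sum.swap[of _ "cones_dim F 2"])
  also have "\<dots> = (\<Sum>v\<in>cones_dim F 1. \<Sum>\<tau>\<in>{\<tau>\<in>cones_dim F 2. v \<subseteq> \<tau>}. k v \<tau> * l_form \<tau> ^ (r + 1))"
  proof (rule sum.cong[OF refl])
    fix v assume v: "v \<in> cones_dim F 1"
    have "(\<Sum>\<tau>\<in>{\<tau>\<in>cones_dim F 2. v \<subseteq> \<tau>}. k v \<tau> * l_form \<tau> ^ (r + 1))
        = (\<Sum>\<tau>\<in>cones_dim F 2. if v \<subseteq> \<tau> then k v \<tau> * l_form \<tau> ^ (r + 1) else 0)"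
      by (rule sum.inter_filter[OF fin_cd[OF fan]])
    also have "\<dots> = (\<Sum>\<tau>\<in>cones_dim F 2. k v \<tau> * l_form \<tau> ^ (r + 1))"
      by (rule sum.cong) (use kz[OF v] in auto)
    finally show "(\<Sum>\<tau>\<in>cones_dim F 2. k v \<tau> * l_form \<tau> ^ (r + 1)) = (\<Sum>\<tau>\<in>{\<tau>\<in>cones_dim F 2. v \<subseteq> \<tau>}. k v \<tau> * l_form \<tau> ^ (r + 1))" by simp
  qed
  also have "\<dots> = 0" using ks by simp
  finally show "x \<in> Vr F r" using ch unfolding Vr_def by blast
qed

end


context
  fixes F :: "vec3 set set" and r :: nat
  assumes fan: "is_fan F"
begin

lemma Zmem:
  assumes "z \<in> J_cycles1 F r"
  shows "z \<in> chains F 1" "\<And>\<gamma>. z \<gamma> \<in> Jid F r \<gamma>" "(\<Sum>\<rho>\<in>cones_dim F 1. z \<rho>) = 0"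
proof -
  show c: "z \<in> chains F 1" using assms unfolding J_cycles1_def Jchains_def by blast
  show "\<And>\<gamma>. z \<gamma> \<in> Jid F r \<gamma>" using assms unfolding J_cycles1_def Jchains_def by blast
  have "bdry F z = (\<lambda>_. 0)" using assms unfolding J_cycles1_def by blast
  then show "(\<Sum>\<rho>\<in>cones_dim F 1. z \<rho>) = 0" using cycle_iff[OF fan c] by blast
qed

lemma rep_ok_Z:
  assumes "z \<in> J_cycles1 F r" "\<rho> \<in> cones_dim F 1"
  shows "z \<rho> = (\<Sum>\<tau>\<in>Tset F \<rho>. repf F r z \<rho> \<tau> * LL r \<tau>)"
  using repf_ok[where z=z, OF fan assms(2) Zmem(2)[OF assms(1)]] .

lemma C1:
  assumes z: "z \<in> J_cycles1 F r"
  shows "gmap F r z \<in> Vr F r"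
proof -
  have ch: "gmap F r z \<in> chains F 2" unfolding chains_def gmap_def Gm_def by simp
  have "(\<Sum>\<tau>\<in>cones_dim F 2. gmap F r z \<tau> * l_form \<tau> ^ (r + 1))
      = (\<Sum>\<tau>\<in>cones_dim F 2. \<Sum>\<rho>\<in>Rset F \<tau>. repf F r z \<rho> \<tau> * LL r \<tau>)"
    by (rule sum.cong) (auto simp: gmap_def Gm_def LL_def sum_distrib_right)
  also have "\<dots> = (\<Sum>\<rho>\<in>cones_dim F 1. \<Sum>\<tau>\<in>Tset F \<rho>. repf F r z \<rho> \<tau> * LL r \<tau>)"
    by (rule swap[OF fan])
  also have "\<dots> = (\<Sum>\<rho>\<in>cones_dim F 1. z \<rho>)"
    by (rule sum.cong) (use rep_ok_Z[OF z] in auto)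
  also have "\<dots> = 0" using Zmem(3)[OF z] .
  finally show ?thesis using ch unfolding Vr_def by blast
qed

lemma C3:
  assumes z1: "z1 \<in> J_cycles1 F r" and z2: "z2 \<in> J_cycles1 F r"
  shows "(\<lambda>y. gmap F r (\<lambda>x. z1 x + z2 x) y - (gmap F r z1 y + gmap F r z2 y)) \<in> Kr F r"
proof -
  let ?p = "\<lambda>x. z1 x + z2 x"
  let ?f2 = "\<lambda>\<rho> \<tau>. repf F r z1 \<rho> \<tau> + repf F r z2 \<rho> \<tau>"
  have h2: "?p \<rho> = (\<Sum>\<tau>\<in>Tset F \<rho>. ?f2 \<rho> \<tau> * LL r \<tau>)" if "\<rho> \<in> cones_dim F 1" for \<rho>
    using rep_ok_Z[OF z1 that] rep_ok_Z[OF z2 that] by (simp add: sum.distrib distrib_right)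
  have h1: "?p \<rho> = (\<Sum>\<tau>\<in>Tset F \<rho>. repf F r ?p \<rho> \<tau> * LL r \<tau>)" if "\<rho> \<in> cones_dim F 1" for \<rho>
    using repf_ok[where z="?p", OF fan that repr_Jid[OF fan that h2[OF that]]] .
  have "(\<lambda>\<tau>. Gm F (repf F r ?p) \<tau> - Gm F ?f2 \<tau>) \<in> Kr F r" by (rule K1[OF fan h1 h2])
  then show ?thesis unfolding gmap_def Gm_add .
qed

lemma C4:
  assumes z: "z \<in> J_cycles1 F r"
  shows "(\<lambda>y. gmap F r (\<lambda>x. c * z x) y - c * gmap F r z y) \<in> Kr F r"
proof -
  let ?p = "\<lambda>x. c * z x"
  let ?f2 = "\<lambda>\<rho> \<tau>. c * repf F r z \<rho> \<tau>"
  have h2: "?p \<rho> = (\<Sum>\<tau>\<in>Tset F \<rho>. ?f2 \<rho> \<tau> * LL r \<tau>)" if "\<rho> \<in> cones_dim F 1" for \<rho>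
    using rep_ok_Z[OF z that] by (simp add: sum_distrib_left mult.assoc)
  have h1: "?p \<rho> = (\<Sum>\<tau>\<in>Tset F \<rho>. repf F r ?p \<rho> \<tau> * LL r \<tau>)" if "\<rho> \<in> cones_dim F 1" for \<rho>
    using repf_ok[where z="?p", OF fan that repr_Jid[OF fan that h2[OF that]]] .
  have "(\<lambda>\<tau>. Gm F (repf F r ?p) \<tau> - Gm F ?f2 \<tau>) \<in> Kr F r" by (rule K1[OF fan h1 h2])
  then show ?thesis unfolding gmap_def Gm_mult .
qed

end


context
  fixes F :: "vec3 set set" and r :: nat
  assumes fan: "is_fan F"
begin

lemma C2_back:
  assumes z1: "z1 \<in> J_cycles1 F r" and z2: "z2 \<in> J_cycles1 F r"
    and B: "(\<lambda>x. z1 x - z2 x) \<in> J_boundaries1 F r"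
  shows "(\<lambda>y. gmap F r z1 y - gmap F r z2 y) \<in> Kr F r"
proof -
  obtain r1 r2 where rr: "\<And>\<tau>. \<tau> \<in> cones_dim F 2 \<Longrightarrow> r1 \<tau> \<in> cones_dim F 1 \<and> r2 \<tau> \<in> cones_dim F 1 \<and> r1 \<tau> \<noteq> r2 \<tau> \<and>
     Rset F \<tau> = {r1 \<tau>, r2 \<tau>} \<and> incid \<tau> (r1 \<tau>) = 1 \<and> incid \<tau> (r2 \<tau>) = -1"
    using rays_choice[OF fan] by blast
  obtain b where b: "b \<in> Jchains F r 2" "(\<lambda>x. z1 x - z2 x) = bdry F b"
    using B unfolding J_boundaries1_def by blast
  define cb where "cb \<tau> = (SOME c. b \<tau> = c * LL r \<tau>)" for \<tau>
  have bcb: "b \<tau> = cb \<tau> * LL r \<tau>" if "\<tau> \<in> cones_dim F 2" for \<tau>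
  proof -
    have "b \<tau> \<in> Jid F r \<tau>" using b(1) unfolding Jchains_def by blast
    then have "\<exists>c. b \<tau> = c * LL r \<tau>" unfolding Jid_2cone[OF fan that] by blast
    then show ?thesis unfolding cb_def by (rule someI_ex)
  qed
  define f1 where "f1 \<rho> \<tau> = repf F r z1 \<rho> \<tau> - repf F r z2 \<rho> \<tau>" for \<rho> \<tau>
  define f2 where "f2 \<rho> \<tau> = of_int (incid \<tau> \<rho>) * cb \<tau>" for \<rho> \<tau>
  have h1: "z1 \<rho> - z2 \<rho> = (\<Sum>\<tau>\<in>Tset F \<rho>. f1 \<rho> \<tau> * LL r \<tau>)" if "\<rho> \<in> cones_dim F 1" for \<rho>
    using rep_ok_Z[OF fan z1 that] rep_ok_Z[OF fan z2 that] unfolding f1_def by (simp add: sum_subtractf left_diff_distrib)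
  have h2: "z1 \<rho> - z2 \<rho> = (\<Sum>\<tau>\<in>Tset F \<rho>. f2 \<rho> \<tau> * LL r \<tau>)" if \<rho>: "\<rho> \<in> cones_dim F 1" for \<rho>
  proof -
    have "z1 \<rho> - z2 \<rho> = bdry F b \<rho>" using fun_cong[OF b(2), of \<rho>] by simp
    also have "\<dots> = (\<Sum>\<tau>\<in>Tset F \<rho>. of_int (incid \<tau> \<rho>) * b \<tau>)" by (rule bdry_ray[OF fan \<rho>])
    also have "\<dots> = (\<Sum>\<tau>\<in>Tset F \<rho>. f2 \<rho> \<tau> * LL r \<tau>)"
      by (rule sum.cong[OF refl]) (auto simp: f2_def Tset_def bcb mult.assoc)
    finally show ?thesis .
  qed
  have K: "(\<lambda>\<tau>. Gm F f1 \<tau> - Gm F f2 \<tau>) \<in> Kr F r" by (rule K1[OF fan h1 h2])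
  have G2: "Gm F f2 \<tau> = 0" for \<tau>
  proof (cases "\<tau> \<in> cones_dim F 2")
    case True
    note R = rr[OF True]
    have "Gm F f2 \<tau> = (\<Sum>\<rho>\<in>{r1 \<tau>, r2 \<tau>}. f2 \<rho> \<tau>)" using True R unfolding Gm_def by simp
    also have "\<dots> = f2 (r1 \<tau>) \<tau> + f2 (r2 \<tau>) \<tau>" using R by simp
    also have "\<dots> = 0" using R unfolding f2_def by simp
    finally show ?thesis .
  next
    case False then show ?thesis unfolding Gm_def by simp
  qed
  have "(\<lambda>y. gmap F r z1 y - gmap F r z2 y) = (\<lambda>\<tau>. Gm F f1 \<tau> - Gm F f2 \<tau>)"
    unfolding G2 f1_def Gm_diff gmap_def by simp
  then show ?thesis using K by simp
qed

lemma C2_forw: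
  assumes z1: "z1 \<in> J_cycles1 F r" and z2: "z2 \<in> J_cycles1 F r"
    and K: "(\<lambda>y. gmap F r z1 y - gmap F r z2 y) \<in> Kr F r"
  shows "(\<lambda>x. z1 x - z2 x) \<in> J_boundaries1 F r"
proof -
  obtain r1 r2 where rr: "\<And>\<tau>. \<tau> \<in> cones_dim F 2 \<Longrightarrow> r1 \<tau> \<in> cones_dim F 1 \<and> r2 \<tau> \<in> cones_dim F 1 \<and> r1 \<tau> \<noteq> r2 \<tau> \<and>
     Rset F \<tau> = {r1 \<tau>, r2 \<tau>} \<and> incid \<tau> (r1 \<tau>) = 1 \<and> incid \<tau> (r2 \<tau>) = -1"
    using rays_choice[OF fan] by blast
  obtain k where k: "\<forall>v\<in>cones_dim F 1. k v \<in> Kv F r v"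
    "(\<lambda>y. gmap F r z1 y - gmap F r z2 y) = (\<lambda>\<tau>. \<Sum>v\<in>cones_dim F 1. k v \<tau>)"
    using K unfolding Kr_def by blast
  have kz: "k v \<tau> = 0" if "v \<in> cones_dim F 1" "\<not> v \<subseteq> \<tau>" for v \<tau>
    using k(1) that unfolding Kv_def by blast
  have ks: "(\<Sum>\<tau>\<in>Tset F v. k v \<tau> * LL r \<tau>) = 0" if "v \<in> cones_dim F 1" for v
    using k(1) that unfolding Kv_def Tset_def LL_def by blast
  define f' where "f' \<rho> \<tau> = repf F r z1 \<rho> \<tau> - repf F r z2 \<rho> \<tau> - k \<rho> \<tau>" for \<rho> \<tau>
  have A: "z1 \<rho> - z2 \<rho> = (\<Sum>\<tau>\<in>Tset F \<rho>. f' \<rho> \<tau> * LL r \<tau>)" if \<rho>: "\<rho> \<in> cones_dim F 1" for \<rho>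
  proof -
    have "(\<Sum>\<tau>\<in>Tset F \<rho>. f' \<rho> \<tau> * LL r \<tau>) =
      (\<Sum>\<tau>\<in>Tset F \<rho>. repf F r z1 \<rho> \<tau> * LL r \<tau>) - (\<Sum>\<tau>\<in>Tset F \<rho>. repf F r z2 \<rho> \<tau> * LL r \<tau>) - (\<Sum>\<tau>\<in>Tset F \<rho>. k \<rho> \<tau> * LL r \<tau>)"
      unfolding f'_def by (simp add: sum_subtractf left_diff_distrib)
    then show ?thesis using rep_ok_Z[OF fan z1 \<rho>] rep_ok_Z[OF fan z2 \<rho>] ks[OF \<rho>] by simp
  qed
  have B: "f' (r1 \<tau>) \<tau> + f' (r2 \<tau>) \<tau> = 0" if \<tau>: "\<tau> \<in> cones_dim F 2" for \<tau>
  proof -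
    note R = rr[OF \<tau>]
    have s1: "(\<Sum>v\<in>Rset F \<tau>. k v \<tau>) = (\<Sum>v\<in>cones_dim F 1. k v \<tau>)"
    proof -
      have "(\<Sum>v\<in>Rset F \<tau>. k v \<tau>) = (\<Sum>v\<in>cones_dim F 1. if v \<subseteq> \<tau> then k v \<tau> else 0)"
        unfolding Rset_def by (rule sum.inter_filter[OF fin_cd[OF fan]])
      also have "\<dots> = (\<Sum>v\<in>cones_dim F 1. k v \<tau>)" by (rule sum.cong) (use kz in auto)
      finally show ?thesis .
    qed
    have s2: "gmap F r z1 \<tau> - gmap F r z2 \<tau> = (\<Sum>v\<in>cones_dim F 1. k v \<tau>)" using fun_cong[OF k(2), of \<tau>] by simp
    have "(\<Sum>\<rho>\<in>Rset F \<tau>. f' \<rho> \<tau>) = gmap F r z1 \<tau> - gmap F r z2 \<tau> - (\<Sum>v\<in>Rset F \<tau>. k v \<tau>)"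
      unfolding f'_def gmap_def Gm_def using \<tau> by (simp add: sum_subtractf)
    also have "\<dots> = 0" using s1 s2 by simp
    finally have "(\<Sum>\<rho>\<in>Rset F \<tau>. f' \<rho> \<tau>) = 0" .
    moreover have "(\<Sum>\<rho>\<in>Rset F \<tau>. f' \<rho> \<tau>) = f' (r1 \<tau>) \<tau> + f' (r2 \<tau>) \<tau>"
      using R by (simp only: sum.insert[OF finite.insertI[OF finite.emptyI]] insert_iff empty_iff sum.empty) simp
    ultimately show ?thesis by simp
  qed
  define c where "c \<tau> = (if \<tau> \<in> cones_dim F 2 then f' (r1 \<tau>) \<tau> else 0)" for \<tau>
  define b where "b \<tau> = c \<tau> * LL r \<tau>" for \<tau>
  have bJ: "b \<in> Jchains F r 2"
    unfolding Jchains_def chains_def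
  proof (intro CollectI conjI allI impI)
    fix \<gamma> assume "\<gamma> \<notin> cones_dim F 2" then show "b \<gamma> = 0" by (simp add: b_def c_def)
  next
    fix \<gamma> show "b \<gamma> \<in> Jid F r \<gamma>"
    proof (cases "\<gamma> \<in> cones_dim F 2")
      case True then show ?thesis unfolding Jid_2cone[OF fan True] b_def by blast
    next
      case False then show ?thesis using zero_Jid by (simp add: b_def c_def)
    qed
  qed
  have ch1: "z \<in> chains F 1" if "z \<in> J_cycles1 F r" for z using Zmem(1)[OF fan that] .
  have bd: "bdry F b \<gamma>' = z1 \<gamma>' - z2 \<gamma>'" for \<gamma>'
  proof (cases "\<gamma>' \<in> cones_dim F 1")
    case True
    have "bdry F b \<gamma>' = (\<Sum>\<tau>\<in>Tset F \<gamma>'. of_int (incid \<tau> \<gamma>') * b \<tau>)" by (rule bdry_ray[OF fan True])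
    also have "\<dots> = (\<Sum>\<tau>\<in>Tset F \<gamma>'. f' \<gamma>' \<tau> * LL r \<tau>)"
    proof (rule sum.cong[OF refl])
      fix \<tau> assume t: "\<tau> \<in> Tset F \<gamma>'"
      then have \<tau>: "\<tau> \<in> cones_dim F 2" "\<gamma>' \<subseteq> \<tau>" unfolding Tset_def by auto
      note R = rr[OF \<tau>(1)]
      have "\<gamma>' \<in> Rset F \<tau>" using True \<tau>(2) unfolding Rset_def by simp
      then have "\<gamma>' = r1 \<tau> \<or> \<gamma>' = r2 \<tau>" using R by simp
      moreover have "f' (r2 \<tau>) \<tau> = - f' (r1 \<tau>) \<tau>" using B[OF \<tau>(1)] add_eq_0_iff by blast
      ultimately show "of_int (incid \<tau> \<gamma>') * b \<tau> = f' \<gamma>' \<tau> * LL r \<tau>"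
        using R \<tau>(1) unfolding b_def c_def by auto
    qed
    also have "\<dots> = z1 \<gamma>' - z2 \<gamma>'" using A[OF True] by simp
    finally show ?thesis .
  next
    case False
    have z0: "z1 \<gamma>' - z2 \<gamma>' = 0" using ch1[OF z1] ch1[OF z2] False unfolding chains_def by simp
    show ?thesis
    proof (cases "\<gamma>' \<in> F")
      case False then show ?thesis using z0 by (simp add: bdry_def)
    next
      case inF: True
      have "aff_dim \<gamma>' \<noteq> 1" using False inF unfolding cones_dim_def by simp
      have "bdry F b \<gamma>' = (\<Sum>\<gamma>\<in>{\<gamma>\<in>F. \<gamma>' face_of \<gamma> \<and> aff_dim \<gamma> = aff_dim \<gamma>' + 1}. of_int (incid \<gamma> \<gamma>') * b \<gamma>)"
        unfolding bdry_def using inF by simp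
      also have "\<dots> = 0"
      proof (rule sum.neutral, rule ballI)
        fix \<gamma> assume "\<gamma> \<in> {\<gamma>\<in>F. \<gamma>' face_of \<gamma> \<and> aff_dim \<gamma> = aff_dim \<gamma>' + 1}"
        then have "\<gamma> \<notin> cones_dim F 2" using \<open>aff_dim \<gamma>' \<noteq> 1\<close> unfolding cones_dim_def by auto
        then show "of_int (incid \<gamma> \<gamma>') * b \<gamma> = 0" by (simp add: b_def c_def)
      qed
      finally show ?thesis using z0 by simp
    qed
  qed
  have "(\<lambda>x. z1 x - z2 x) = bdry F b" using bd by (intro ext) simp
  then show ?thesis unfolding J_boundaries1_def using bJ by blast
qed

lemma C5:
  assumes v: "v \<in> Vr F r"
  shows "\<exists>z\<in>J_cycles1 F r. (\<lambda>y. gmap F r z y - v y) \<in> Kr F r"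
proof -
  obtain r1 r2 where rr: "\<And>\<tau>. \<tau> \<in> cones_dim F 2 \<Longrightarrow> r1 \<tau> \<in> cones_dim F 1 \<and> r2 \<tau> \<in> cones_dim F 1 \<and> r1 \<tau> \<noteq> r2 \<tau> \<and>
     Rset F \<tau> = {r1 \<tau>, r2 \<tau>} \<and> incid \<tau> (r1 \<tau>) = 1 \<and> incid \<tau> (r2 \<tau>) = -1"
    using rays_choice[OF fan] by blast
  have vch: "v \<in> chains F 2" and vs: "(\<Sum>\<tau>\<in>cones_dim F 2. v \<tau> * l_form \<tau> ^ (r + 1)) = 0"
    using v unfolding Vr_def by auto
  define fs where "fs \<rho> \<tau> = (if \<tau> \<in> cones_dim F 2 \<and> \<rho> = r1 \<tau> then v \<tau> else 0)" for \<rho> \<tau>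
  define z where "z \<rho> = (if \<rho> \<in> cones_dim F 1 then (\<Sum>\<tau>\<in>Tset F \<rho>. fs \<rho> \<tau> * LL r \<tau>) else 0)" for \<rho>
  have Gfs: "(\<Sum>\<rho>\<in>Rset F \<tau>. fs \<rho> \<tau> * X) = v \<tau> * X" if \<tau>: "\<tau> \<in> cones_dim F 2" for \<tau> X
  proof -
    have "(\<Sum>\<rho>\<in>Rset F \<tau>. fs \<rho> \<tau> * X) = (\<Sum>\<rho>\<in>Rset F \<tau>. if \<rho> = r1 \<tau> then v \<tau> * X else 0)"
      by (rule sum.cong) (auto simp: fs_def \<tau>)
    also have "\<dots> = v \<tau> * X" using rr[OF \<tau>] Rset_fin[OF fan] by (simp add: sum.delta')
    finally show ?thesis .
  qed
  have zch: "z \<in> chains F 1" unfolding chains_def z_def by simp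
  have zJ: "z \<gamma> \<in> Jid F r \<gamma>" for \<gamma>
  proof (cases "\<gamma> \<in> cones_dim F 1")
    case True then show ?thesis unfolding z_def using repr_Jid[OF fan True refl] by simp
  next
    case False then show ?thesis unfolding z_def using zero_Jid by simp
  qed
  have "(\<Sum>\<rho>\<in>cones_dim F 1. z \<rho>) = (\<Sum>\<rho>\<in>cones_dim F 1. \<Sum>\<tau>\<in>Tset F \<rho>. fs \<rho> \<tau> * LL r \<tau>)"
    by (rule sum.cong) (auto simp: z_def)
  also have "\<dots> = (\<Sum>\<tau>\<in>cones_dim F 2. \<Sum>\<rho>\<in>Rset F \<tau>. fs \<rho> \<tau> * LL r \<tau>)" by (rule swap[OF fan, symmetric])
  also have "\<dots> = (\<Sum>\<tau>\<in>cones_dim F 2. v \<tau> * l_form \<tau> ^ (r + 1))"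
    by (rule sum.cong) (auto simp: Gfs LL_def)
  also have "\<dots> = 0" by (rule vs)
  finally have zs: "(\<Sum>\<rho>\<in>cones_dim F 1. z \<rho>) = 0" .
  have zZ: "z \<in> J_cycles1 F r"
    unfolding J_cycles1_def Jchains_def using zch zJ cycle_iff[OF fan zch] zs by blast
  have h2: "z \<rho> = (\<Sum>\<tau>\<in>Tset F \<rho>. fs \<rho> \<tau> * LL r \<tau>)" if "\<rho> \<in> cones_dim F 1" for \<rho>
    using that unfolding z_def by simp
  have K: "(\<lambda>\<tau>. Gm F (repf F r z) \<tau> - Gm F fs \<tau>) \<in> Kr F r"
    by (rule K1[OF fan rep_ok_Z[OF fan zZ] h2])
  have "Gm F fs \<tau> = v \<tau>" for \<tau>
  proof (cases "\<tau> \<in> cones_dim F 2")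
    case True then show ?thesis unfolding Gm_def using Gfs[OF True, of 1] by simp
  next
    case False then show ?thesis unfolding Gm_def using vch unfolding chains_def by simp
  qed
  then have "(\<lambda>y. gmap F r z y - v y) = (\<lambda>\<tau>. Gm F (repf F r z) \<tau> - Gm F fs \<tau>)" unfolding gmap_def by simp
  then have "(\<lambda>y. gmap F r z y - v y) \<in> Kr F r" using K by simp
  then show ?thesis by (rule bexI[OF _ zZ])
qed

end

theorem lemma9p7:
  fixes F :: "(real^3) set set" and r :: nat
  assumes "is_fan F" and "pure3 F" and "complete_fan F" and "hereditary F"
  shows "Kr F r \<subseteq> Vr F r \<and> quot_mod_iso (J_cycles1 F r) (J_boundaries1 F r) (Vr F r) (Kr F r)"
proof
  show "Kr F r \<subseteq> Vr F r" by (rule Kr_sub_Vr[OF assms(1)])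
  show "quot_mod_iso (J_cycles1 F r) (J_boundaries1 F r) (Vr F r) (Kr F r)"
    unfolding quot_mod_iso_def
  proof (intro exI[of _ "gmap F r"] conjI ballI)
    fix z assume "z \<in> J_cycles1 F r" then show "gmap F r z \<in> Vr F r" by (rule C1[OF assms(1)])
  next
    fix z1 z2 assume "z1 \<in> J_cycles1 F r" "z2 \<in> J_cycles1 F r"
    then show "((\<lambda>x. z1 x - z2 x) \<in> J_boundaries1 F r) = ((\<lambda>y. gmap F r z1 y - gmap F r z2 y) \<in> Kr F r)"
      using C2_back[OF assms(1)] C2_forw[OF assms(1)] by blast
  next
    fix z1 z2 assume "z1 \<in> J_cycles1 F r" "z2 \<in> J_cycles1 F r"
    then show "(\<lambda>y. gmap F r (\<lambda>x. z1 x + z2 x) y - (gmap F r z1 y + gmap F r z2 y)) \<in> Kr F r"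
      by (rule C3[OF assms(1)])
  next
    fix v assume "v \<in> Vr F r" then show "\<exists>z\<in>J_cycles1 F r. (\<lambda>y. gmap F r z y - v y) \<in> Kr F r"
      by (rule C5[OF assms(1)])
  next
    show "\<forall>c. \<forall>z\<in>J_cycles1 F r. (\<lambda>y. gmap F r (\<lambda>x. c * z x) y - c * gmap F r z y) \<in> Kr F r"
      using C4[OF assms(1)] by blast
  qed
qed


end
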